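(* Let $A$ be a finite alphabet and let $\mu$ be an invariant sofic probability measure on a shift space over $A$. Let $n$ be the dimension of the minimal (reduced) linear representation of $\mu$, and set $K=2^{n^2-1}$. If $\mu$ is not a $K$-step Markov measure, then $\mu$ is not a $k$-step Markov measure for any integer $k\geqslant 1$.
   Context: Shift spaces: $A^{\mathbb{Z}}$ with the product topology and shift $S$, $(Sx)_i=x_{i+1}$; a shift space is a closed $S$-invariant subset $X\subseteq A^{\mathbb Z}$, $\mathcal L(X)$ its set of finite factors and $\mathcal L_k(X)$ those of length $k$. A shift of finite type is a shift space consisting of all sequences avoiding a finite set of words. A factor map is a surjective sliding block code $\phi\colon X\to Y$, $\phi(x)_i=f(x_{i-m}\cdots x_{i+n})$. For a probability measure $\mu$ on $X$, $\hat\mu(w)=\mu(\{x: x_0\cdots x_{|w|-1}=w\})$ for $w\in A^*$. A $1$-step Markov measure is defined by an irreducible stochastic $A\times A$ matrix $M$ and a stochastic row vector $v$ with $vM=v$, via $\hat\mu(a_1\cdots a_m)=v_{a_1}M_{a_1,a_2}\cdots M_{a_{m-1},a_m}$; it is viewed as a measure on any shift containing $X_M=\{x: M_{x_i,x_{i+1}}>0\ \forall i\}$. A probability measure $\nu$ on a shift space $Y$ is sofic if $\nu=\phi\mu$ (i.e. $\nu(U)=\mu(\phi^{-1}U)$) for a factor map $\phi\colon X\to Y$ from a shift of finite type $X$ and a $1$-step Markov measure $\mu$ on $X$. The $k$-th higher block code $\gamma_k$ maps $x$ to the sequence $y$ with $y_i=f(x_{i-k+1}\cdots x_i)$, where $f$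 is a bijection from $\mathcal L_k(X)$ onto a new alphabet $A_k$; a measure $\mu$ on $X$ is $k$-step Markov if its image under $\gamma_k$ is a $1$-step Markov measure. A linear representation of dimension $n$ of $\mu$ is a triple $(\lambda,\varphi,\gamma)$ with $\lambda\in\mathbb R^{1\times n}$, $\gamma\in\mathbb R^{n\times 1}$ and $\varphi$ a monoid morphism from $A^*$ to real $n\times n$ matrices such that $\hat\mu(w)=\lambda\varphi(w)\gamma$ for all $w\in A^*$. It is reduced if the vectors $\lambda\varphi(w)$, $w\in A^*$, span $\mathbb R^{1\times n}$ and the vectors $\varphi(w)\gamma$, $w\in A^*$, span $\mathbb R^{n}$; the reduced (minimal) representation is unique up to linear isomorphism, and its dimension is the smallest possible. *)

theory Defs
  imports "HOL-Probability.Probability" "Jordan_Normal_Form.Matrix"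
begin

definition seqM :: "(int \<Rightarrow> 'b) measure" where
  "seqM = PiM (UNIV :: int set) (\<lambda>_. count_space (UNIV :: 'b set))"

definition shift :: "(int \<Rightarrow> 'b) \<Rightarrow> (int \<Rightarrow> 'b)" where
  "shift x = (\<lambda>i. x (i + 1))"

definition window :: "(int \<Rightarrow> 'b) \<Rightarrow> int \<Rightarrow> nat \<Rightarrow> 'b list" where
  "window x i l = map (\<lambda>j. x (i + int j)) [0..<l]"

definition cyl :: "'b list \<Rightarrow> (int \<Rightarrow> 'b) set" where
  "cyl w = {x. \<forall>i<length w. x (int i) = w ! i}"

definition hat :: "(int \<Rightarrow> 'b) measure \<Rightarrow> 'b list \<Rightarrow> real" where
  "hat \<mu> w = measure \<mu> (cyl w)"

definition shift_space :: "'b set \<Rightarrow> (int \<Rightarrow> 'b) set \<Rightarrow> bool" where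
  "shift_space B X \<longleftrightarrow> finite B \<and> X \<subseteq> {x. \<forall>i. x i \<in> B} \<and>
     closedin (product_topology (\<lambda>_. discrete_topology B) UNIV) X \<and> shift ` X = X"

definition sft :: "'b set \<Rightarrow> (int \<Rightarrow> 'b) set \<Rightarrow> bool" where
  "sft B X \<longleftrightarrow> finite B \<and> (\<exists>F :: 'b list set. finite F \<and>
     X = {x. (\<forall>i. x i \<in> B) \<and> (\<forall>i. \<forall>w\<in>F. window x i (length w) \<noteq> w)})"

definition block_code :: "nat \<Rightarrow> nat \<Rightarrow> ('b list \<Rightarrow> 'c) \<Rightarrow> (int \<Rightarrow> 'b) \<Rightarrow> (int \<Rightarrow> 'c)" where
  "block_code m n f x = (\<lambda>i. f (window x (i - int m) (m + n + 1)))"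

definition markov_data :: "'b set \<Rightarrow> ('b \<Rightarrow> 'b \<Rightarrow> real) \<Rightarrow> ('b \<Rightarrow> real) \<Rightarrow> bool" where
  "markov_data C P v \<longleftrightarrow> finite C \<and> C \<noteq> {} \<and>
     (\<forall>a\<in>C. \<forall>b\<in>C. P a b \<ge> 0) \<and> (\<forall>a\<in>C. (\<Sum>b\<in>C. P a b) = 1) \<and>
     (\<forall>a\<in>C. \<forall>b\<in>C. (a, b) \<in> {(a, b). a \<in> C \<and> b \<in> C \<and> P a b > 0}\<^sup>+) \<and>
     (\<forall>a\<in>C. v a \<ge> 0) \<and> (\<Sum>a\<in>C. v a) = 1 \<and>
     (\<forall>b\<in>C. (\<Sum>a\<in>C. v a * P a b) = v b)"

definition markov_support :: "'b set \<Rightarrow> ('b \<Rightarrow> 'b \<Rightarrow> real) \<Rightarrow> (int \<Rightarrow> 'b) set" where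
  "markov_support C P = {x. \<forall>i. x i \<in> C \<and> P (x i) (x (i + 1)) > 0}"

definition is_markov_measure ::
  "'b set \<Rightarrow> ('b \<Rightarrow> 'b \<Rightarrow> real) \<Rightarrow> ('b \<Rightarrow> real) \<Rightarrow> (int \<Rightarrow> 'b) measure \<Rightarrow> bool" where
  "is_markov_measure C P v \<mu> \<longleftrightarrow> markov_data C P v \<and> prob_space \<mu> \<and> sets \<mu> = sets seqM \<and>
     (\<forall>w. w \<noteq> [] \<longrightarrow> hat \<mu> w =
        (if set w \<subseteq> C then v (hd w) * (\<Prod>i<length w - 1. P (w ! i) (w ! Suc i)) else 0))"

definition markov1 :: "(int \<Rightarrow> 'b) measure \<Rightarrow> bool" where
  "markov1 \<mu> \<longleftrightarrow> (\<exists>C P v. is_markov_measure C P v \<mu>)"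

definition higher_block :: "nat \<Rightarrow> (int \<Rightarrow> 'b) \<Rightarrow> (int \<Rightarrow> 'b list)" where
  "higher_block k x = (\<lambda>i. window x (i - int k + 1) k)"

definition k_step_markov :: "nat \<Rightarrow> (int \<Rightarrow> 'b) measure \<Rightarrow> bool" where
  "k_step_markov k \<mu> \<longleftrightarrow> markov1 (distr \<mu> seqM (higher_block k))"

definition shift_invariant :: "(int \<Rightarrow> 'b) measure \<Rightarrow> bool" where
  "shift_invariant \<mu> \<longleftrightarrow> (\<forall>U\<in>sets seqM. emeasure \<mu> (shift -` U) = emeasure \<mu> U)"

(* nu = phi mu for a factor map phi : X \<rightarrow> Y from an SFT X (alphabet a finite set of
   naturals) and a 1-step Markov measure mu on X *)
definition sofic_on :: "(int \<Rightarrow> 'a) measure \<Rightarrow> (int \<Rightarrow> 'a) set \<Rightarrow> bool" where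
  "sofic_on \<nu> Y \<longleftrightarrow> (\<exists>(B :: nat set) X \<mu> C P v m n f.
     sft B X \<and> is_markov_measure C P v \<mu> \<and> markov_support C P \<subseteq> X \<and>
     block_code m n f ` X = Y \<and> sets \<nu> = sets seqM \<and>
     (\<forall>U\<in>sets seqM. emeasure \<nu> U = emeasure \<mu> (block_code m n f -` U)))"

definition sofic_measure :: "(int \<Rightarrow> 'a) measure \<Rightarrow> bool" where
  "sofic_measure \<nu> \<longleftrightarrow> (\<exists>Y. shift_space UNIV Y \<and> sofic_on \<nu> Y)"

definition lin_rep :: "('a list \<Rightarrow> real) \<Rightarrow> nat \<Rightarrow> real vec \<Rightarrow> ('a list \<Rightarrow> real mat) \<Rightarrow> real vec \<Rightarrow> bool" where
  "lin_rep p n lam Phi gam \<longleftrightarrow> lam \<in> carrier_vec n \<and> gam \<in> carrier_vec n \<and>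
     (\<forall>w. Phi w \<in> carrier_mat n n) \<and> Phi [] = 1\<^sub>m n \<and>
     (\<forall>u w. Phi (u @ w) = Phi u * Phi w) \<and>
     (\<forall>w. p w = lam \<bullet> (Phi w *\<^sub>v gam))"

definition min_rep_dim :: "('a list \<Rightarrow> real) \<Rightarrow> nat" where
  "min_rep_dim p = (LEAST n. \<exists>lam Phi gam. lin_rep p n lam Phi gam)"

end

theory Submission
  imports Defs "HOL-Library.Function_Algebras"
begin

lemma space_seqM[simp]: "space seqM = UNIV"
  by (simp add: seqM_def space_PiM)

lemma coord_meas: "(\<lambda>x. x j) \<in> measurable seqM (count_space UNIV)"
  unfolding seqM_def by (rule measurable_component_singleton) simp

lemma coord_set: "{x. x j = c} \<in> sets seqM"
proof -
  have "(\<lambda>x. x j) -` {c} \<inter> space seqM \<in> sets seqM"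
    by (rule measurable_sets[OF coord_meas]) simp
  then show ?thesis by (simp add: vimage_def)
qed

lemma fin_set: "finite I \<Longrightarrow> {x. \<forall>i\<in>I. x (f i) = g i} \<in> sets seqM"
proof (induction I rule: finite_induct)
  case empty
  then show ?case using sets.top[of seqM] by simp
next
  case (insert a I)
  have "{x. \<forall>i\<in>insert a I. x (f i) = g i} = {x. x (f a) = g a} \<inter> {x. \<forall>i\<in>I. x (f i) = g i}"
    by auto
  then show ?case using insert coord_set by (auto intro!: sets.Int)
qed

lemma cyl_sets: "cyl w \<in> sets seqM"
proof -
  have "cyl w = {x. \<forall>i\<in>{..<length w}. x (int i) = w ! i}" by (auto simp: cyl_def)
  then show ?thesis using fin_set[of "{..<length w}" int "\<lambda>i. w ! i"] by simp
qed

lemma shift_meas: "shift \<in> measurable seqM seqM"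
  unfolding seqM_def shift_def
  by (rule measurable_PiM_single') (auto intro!: measurable_component_singleton simp: space_PiM)

lemma shift_pow: "(shift ^^ j) x = (\<lambda>i. x (i + int j))"
  by (induction j arbitrary: x) (auto simp: shift_def ac_simps)

lemma shift_pow_meas: "shift ^^ j \<in> measurable seqM seqM"
  by (induction j) (auto intro: measurable_compose[OF _ shift_meas])

locale sm =
  fixes \<nu> :: "(int \<Rightarrow> 'a::finite) measure"
  assumes prob: "prob_space \<nu>" and sets_nu: "sets \<nu> = sets seqM"
    and inv: "shift_invariant \<nu>"
begin

abbreviation "p \<equiv> hat \<nu>"

lemma space_nu[simp]: "space \<nu> = UNIV"
  using sets_eq_imp_space_eq[OF sets_nu] by simp

lemma fm: "finite_measure \<nu>" using prob prob_space_def by blast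

lemma inv_pow: "U \<in> sets seqM \<Longrightarrow> emeasure \<nu> ((shift ^^ j) -` U) = emeasure \<nu> U"
proof (induction j arbitrary: U)
  case 0 then show ?case by simp
next
  case (Suc j)
  have m: "(shift ^^ j) -` U \<in> sets seqM"
    using measurable_sets[OF shift_pow_meas Suc.prems] by simp
  have eq: "(shift ^^ Suc j) -` U = shift -` ((shift ^^ j) -` U)"
    by (simp only: funpow_Suc_right vimage_comp)
  have "emeasure \<nu> ((shift ^^ Suc j) -` U) = emeasure \<nu> (shift -` ((shift ^^ j) -` U))"
    by (simp only: eq)
  also have "... = emeasure \<nu> ((shift ^^ j) -` U)" using inv m by (simp add: shift_invariant_def)
  also have "... = emeasure \<nu> U" using Suc by simp
  finally show ?case .
qed

lemma inv_pow_m: "U \<in> sets seqM \<Longrightarrow> measure \<nu> ((shift ^^ j) -` U) = measure \<nu> U"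
  using inv_pow by (simp add: measure_def)

lemma p_nonneg: "p w \<ge> 0" by (simp add: hat_def)

lemma p_nil: "p [] = 1"
proof -
  have "cyl [] = space \<nu>" by (simp add: cyl_def)
  then show ?thesis using prob_space.prob_space[OF prob] by (simp add: hat_def)
qed

lemma shifted_cyl:
  "measure \<nu> {x. \<forall>i<length z. x (int i - int s) = z ! i} = p z"
proof -
  let ?E = "{x. \<forall>i<length z. x (int i - int s) = z ! i}"
  have E: "?E \<in> sets seqM"
    using fin_set[of "{..<length z}" "\<lambda>i. int i - int s" "\<lambda>i. z ! i"]
    by (simp add: lessThan_def)
  have "(shift ^^ s) -` ?E = cyl z" by (auto simp: shift_pow cyl_def)
  moreover have "measure \<nu> ((shift ^^ s) -` ?E) = measure \<nu> ?E" by (rule inv_pow_m[OF E])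
  ultimately show ?thesis by (simp add: hat_def)
qed

lemma shifted_cyl2:
  "measure \<nu> {x. \<forall>i<length z. x (int i + int s) = z ! i} = p z"
proof -
  let ?E = "{x. \<forall>i<length z. x (int i + int s) = z ! i}"
  have "(shift ^^ s) -` cyl z = ?E" by (auto simp: shift_pow cyl_def)
  moreover have "measure \<nu> ((shift ^^ s) -` cyl z) = measure \<nu> (cyl z)" by (rule inv_pow_m[OF cyl_sets])
  ultimately show ?thesis by (simp add: hat_def)
qed

lemma cyl_append: "cyl (u @ w) = {x. x \<in> cyl u \<and> (\<forall>i<length w. x (int i + int (length u)) = w ! i)}"
proof (rule equalityI; rule subsetI)
  fix x assume "x \<in> cyl (u @ w)"
  then have H: "\<And>i. i < length u + length w \<Longrightarrow> x (int i) = (u @ w) ! i" by (simp add: cyl_def)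
  have 1: "x \<in> cyl u" unfolding cyl_def using H by (auto simp: nth_append)
  have 2: "x (int i + int (length u)) = w ! i" if "i < length w" for i
    using H[of "i + length u"] that by (simp add: nth_append)
  show "x \<in> {x. x \<in> cyl u \<and> (\<forall>i<length w. x (int i + int (length u)) = w ! i)}"
    using 1 2 by simp
next
  fix x assume "x \<in> {x. x \<in> cyl u \<and> (\<forall>i<length w. x (int i + int (length u)) = w ! i)}"
  then have 1: "\<And>i. i < length u \<Longrightarrow> x (int i) = u ! i"
    and 2: "\<And>i. i < length w \<Longrightarrow> x (int i + int (length u)) = w ! i" by (auto simp: cyl_def)
  have "x (int i) = (u @ w) ! i" if "i < length (u @ w)" for i
  proof (cases "i < length u")
    case True then show ?thesis using 1 by (simp add: nth_append)
  next
    case False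
    have e: "int (i - length u) + int (length u) = int i" using False by simp
    have "i - length u < length w" using that False by simp
    from 2[OF this] have "x (int (i - length u) + int (length u)) = w ! (i - length u)" .
    then have "x (int i) = w ! (i - length u)" by (simp only: e)
    then show ?thesis using False by (simp add: nth_append)
  qed
  then show "x \<in> cyl (u @ w)" by (simp add: cyl_def)
qed

lemma p_mono_right: "p (u @ w) \<le> p u"
  unfolding hat_def
  by (rule finite_measure.finite_measure_mono[OF fm]) (auto simp: cyl_append sets_nu cyl_sets)

lemma p_mono_left: "p (u @ w) \<le> p w"
proof -
  have "p (u @ w) \<le> measure \<nu> {x. \<forall>i<length w. x (int i + int (length u)) = w ! i}"
    unfolding hat_def
    by (rule finite_measure.finite_measure_mono[OF fm])
      (auto simp: cyl_append sets_nu intro!: fin_set[of "{..<length w}", simplified lessThan_def, simplified])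
  then show ?thesis using shifted_cyl2 by simp
qed

lemma p_mono_mid: "p (u @ w @ s) \<le> p w"
  using p_mono_left[of u "w @ s"] p_mono_right[of w s] by linarith

end

definition blocks :: "nat \<Rightarrow> 'b list \<Rightarrow> 'b list list" where
  "blocks j z = map (\<lambda>i. take j (drop i z)) [0..<Suc (length z) - j]"

lemma length_blocks[simp]: "length (blocks j z) = Suc (length z) - j"
  by (simp add: blocks_def)

lemma nth_blocks: "i < Suc (length z) - j \<Longrightarrow> blocks j z ! i = take j (drop i z)"
  by (simp add: blocks_def)

lemma window_nth: "t < l \<Longrightarrow> window x s l ! t = x (s + int t)"
  by (simp add: window_def)

lemma length_window[simp]: "length (window x s l) = l"
  by (simp add: window_def)

lemma blocks_iff:
  assumes "j \<ge> 1" "length z \<ge> j"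
  shows "(\<forall>i<length (blocks j z). window x (int i + c) j = blocks j z ! i) \<longleftrightarrow>
         (\<forall>i<length z. x (int i + c) = z ! i)"
proof
  assume H: "\<forall>i<length (blocks j z). window x (int i + c) j = blocks j z ! i"
  show "\<forall>i<length z. x (int i + c) = z ! i"
  proof (intro allI impI)
    fix i assume i: "i < length z"
    define b where "b = min i (length z - j)"
    have b: "b < length (blocks j z)" using assms i by (simp add: b_def)
    have t: "i - b < j" using assms i by (simp add: b_def)
    have "window x (int b + c) j ! (i - b) = blocks j z ! b ! (i - b)" using H b by simp
    moreover have "window x (int b + c) j ! (i - b) = x (int i + c)"
      using t by (simp add: window_nth b_def of_nat_diff algebra_simps)
    moreover have "blocks j z ! b ! (i - b) = z ! i"
      using b t assms i by (simp add: nth_blocks b_def)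
    ultimately show "x (int i + c) = z ! i" by simp
  qed
next
  assume H: "\<forall>i<length z. x (int i + c) = z ! i"
  show "\<forall>i<length (blocks j z). window x (int i + c) j = blocks j z ! i"
  proof (intro allI impI)
    fix i assume i: "i < length (blocks j z)"
    show "window x (int i + c) j = blocks j z ! i"
    proof (rule nth_equalityI)
      show "length (window x (int i + c) j) = length (blocks j z ! i)"
        using i assms by (simp add: nth_blocks)
      fix t assume t: "t < length (window x (int i + c) j)"
      then have "window x (int i + c) j ! t = x (int (i + t) + c)"
        by (simp add: window_nth ac_simps)
      also have "... = z ! (i + t)"
      proof -
        have "i + t < length z" using i t assms by simp
        then show ?thesis using H by blast
      qed
      also have "... = blocks j z ! i ! t" using i t assms by (simp add: nth_blocks)
      finally show "window x (int i + c) j ! t = blocks j z ! i ! t" .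
    qed
  qed
qed

lemma blocks_exist:
  assumes "W \<noteq> []" "\<forall>i<length W. window x (int i + c) j = W ! i"
  shows "W = blocks j (map (\<lambda>t. x (int t + c)) [0..<length W + j - 1])"
proof (rule nth_equalityI)
  show "length W = length (blocks j (map (\<lambda>t. x (int t + c)) [0..<length W + j - 1]))"
    using assms(1) by (cases W) auto
  fix i assume i: "i < length W"
  have "W ! i = window x (int i + c) j" using assms i by simp
  also have "... = blocks j (map (\<lambda>t. x (int t + c)) [0..<length W + j - 1]) ! i"
    using i by (auto simp: nth_blocks window_def intro!: nth_equalityI simp: ac_simps)
  finally show "W ! i = blocks j (map (\<lambda>t. x (int t + c)) [0..<length W + j - 1]) ! i" .
qed

lemma window_set: "{x. window x s j = l} \<in> sets seqM"
proof (cases "length l = j")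
  case True
  have "{x. window x s j = l} = {x. \<forall>t\<in>{..<j}. x (s + int t) = l ! t}"
    using True by (auto simp: list_eq_iff_nth_eq window_def)
  then show ?thesis using fin_set[of "{..<j}"] by simp
next
  case False
  then have "{x. window x s j = l} = {}" by auto
  then show ?thesis by simp
qed

lemma hb_coord: "(\<lambda>x::int \<Rightarrow> 'a::finite. window x s j) \<in> measurable seqM (count_space UNIV)"
  by (subst measurable_count_space_eq2_countable) (auto simp: vimage_def window_set)

lemma hb_meas: "(higher_block j :: (int \<Rightarrow> 'a::finite) \<Rightarrow> _) \<in> measurable seqM seqM"
  unfolding higher_block_def
  apply (subst (2) seqM_def)
  apply (rule measurable_PiM_single')
  using hb_coord by (auto simp: space_PiM)

lemma blocks_snoc:
  assumes "j \<ge> 1" "length z \<ge> j"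
  shows "blocks j (z @ [a]) = blocks j z @ [drop (Suc (length z) - j) (z @ [a])]"
proof -
  have e: "Suc (length (z @ [a])) - j = Suc (Suc (length z) - j)" using assms by simp
  have "blocks j (z @ [a]) = map (\<lambda>i. take j (drop i (z @ [a]))) [0..<Suc (length z) - j]
        @ [take j (drop (Suc (length z) - j) (z @ [a]))]"
    unfolding blocks_def e by simp
  also have "map (\<lambda>i. take j (drop i (z @ [a]))) [0..<Suc (length z) - j] = blocks j z"
    unfolding blocks_def using assms by (intro map_cong) auto
  also have "take j (drop (Suc (length z) - j) (z @ [a])) = drop (Suc (length z) - j) (z @ [a])"
    using assms by simp
  finally show ?thesis .
qed

lemma blocks_single: "length w = j \<Longrightarrow> j \<ge> 1 \<Longrightarrow> blocks j w = [w]"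
  by (simp add: blocks_def)

context sm
begin

lemma nu_meas: "higher_block j \<in> measurable \<nu> seqM"
  using hb_meas measurable_cong_sets[OF sets_nu refl] by blast

lemma hat_rho: "hat (distr \<nu> seqM (higher_block j)) W =
   measure \<nu> {x. \<forall>i<length W. window x (int i + (1 - int j)) j = W ! i}"
proof -
  have "hat (distr \<nu> seqM (higher_block j)) W = measure \<nu> (higher_block j -` cyl W \<inter> space \<nu>)"
    unfolding hat_def by (rule measure_distr[OF nu_meas cyl_sets])
  also have "higher_block j -` cyl W \<inter> space \<nu> = {x. \<forall>i<length W. window x (int i + (1 - int j)) j = W ! i}"
    by (auto simp: cyl_def higher_block_def algebra_simps)
  finally show ?thesis .
qed

lemma hat_rho_blocks:
  assumes "j \<ge> 1" "length z \<ge> j"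
  shows "hat (distr \<nu> seqM (higher_block j)) (blocks j z) = p z"
proof -
  have e: "\<And>i. int i + (1 - int j) = int i - int (j - 1)" using assms by auto
  have "{x. \<forall>i<length (blocks j z). window x (int i + (1 - int j)) j = blocks j z ! i}
      = {x. \<forall>i<length z. x (int i + (1 - int j)) = z ! i}"
    by (simp only: blocks_iff[OF assms])
  also have "... = {x. \<forall>i<length z. x (int i - int (j - 1)) = z ! i}"
    by (simp only: e)
  finally show ?thesis using hat_rho shifted_cyl by simp
qed

lemma hat_rho_zero:
  assumes "W \<noteq> []" "\<not> (\<exists>z. length z \<ge> j \<and> W = blocks j z)"
  shows "hat (distr \<nu> seqM (higher_block j)) W = 0"
proof -
  have e: "{x. \<forall>i<length W. window x (int i + (1 - int j)) j = W ! i} = {}"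
  proof (rule ccontr)
    assume "{x. \<forall>i<length W. window x (int i + (1 - int j)) j = W ! i} \<noteq> {}"
    then obtain x where x: "\<forall>i<length W. window x (int i + (1 - int j)) j = W ! i" by auto
    let ?zz = "map (\<lambda>t. x (int t + (1 - int j))) [0..<length W + j - 1]"
    have "W = blocks j ?zz" by (rule blocks_exist[OF assms(1) x])
    moreover have "j \<le> length ?zz" using assms(1) by (cases W) auto
    ultimately show False using assms(2) by blast
  qed
  show ?thesis unfolding hat_rho e by simp
qed

end

lemma markov_ident:
  assumes M: "is_markov_measure C P v \<rho>" and W: "W \<noteq> []"
  shows "hat \<rho> (W @ [b]) * hat \<rho> [last W] = hat \<rho> W * hat \<rho> [last W, b]"
proof -
  have H: "\<And>w. w \<noteq> [] \<Longrightarrow> hat \<rho> w = (if set w \<subseteq> C then v (hd w) * (\<Prod>i<length w - 1. P (w ! i) (w ! Suc i)) else 0)"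
    using M by (simp add: is_markov_measure_def)
  define n where "n = length W - 1"
  have ln: "length W = Suc n" using W by (simp add: n_def)
  have lW: "last W = W ! n" using W by (simp add: n_def last_conv_nth)
  have pr: "(\<Prod>i<length (W @ [b]) - 1. P ((W @ [b]) ! i) ((W @ [b]) ! Suc i))
     = (\<Prod>i<length W - 1. P (W ! i) (W ! Suc i)) * P (last W) b"
  proof -
    have "(\<Prod>i<length (W @ [b]) - 1. P ((W @ [b]) ! i) ((W @ [b]) ! Suc i))
        = (\<Prod>i<Suc n. P ((W @ [b]) ! i) ((W @ [b]) ! Suc i))" using ln by simp
    also have "... = (\<Prod>i<n. P ((W @ [b]) ! i) ((W @ [b]) ! Suc i)) * P ((W @ [b]) ! n) ((W @ [b]) ! Suc n)"
      by simp
    also have "(\<Prod>i<n. P ((W @ [b]) ! i) ((W @ [b]) ! Suc i)) = (\<Prod>i<n. P (W ! i) (W ! Suc i))"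
      using ln by (intro prod.cong) (auto simp: nth_append)
    also have "P ((W @ [b]) ! n) ((W @ [b]) ! Suc n) = P (last W) b"
      using ln lW by (simp add: nth_append)
    finally show ?thesis using ln by simp
  qed
  have hd: "hd (W @ [b]) = hd W" using W by simp
  show ?thesis
  proof (cases "set W \<subseteq> C")
    case True
    note T = this
    have lC: "last W \<in> C" using T W by auto
    show ?thesis
    proof (cases "b \<in> C")
      case True
      have s1: "set (W @ [b]) \<subseteq> C" using T True by simp
      have h1: "hat \<rho> (W @ [b]) = v (hd W) * ((\<Prod>i<length W - 1. P (W ! i) (W ! Suc i)) * P (last W) b)"
        using H[of "W @ [b]"] s1 pr hd by simp
      have h2: "hat \<rho> W = v (hd W) * (\<Prod>i<length W - 1. P (W ! i) (W ! Suc i))"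
        using H[of W] T W by simp
      have h3: "hat \<rho> [last W] = v (last W)"
        using H[of "[last W]"] lC by simp
      have h4: "hat \<rho> [last W, b] = v (last W) * P (last W) b"
        using H[of "[last W, b]"] lC True by simp
      show ?thesis unfolding h1 h2 h3 h4 by (simp only: mult_ac)
    next
      case False
      have h1: "hat \<rho> (W @ [b]) = 0" using H[of "W @ [b]"] False by simp
      have h4: "hat \<rho> [last W, b] = 0" using H[of "[last W, b]"] False by simp
      show ?thesis unfolding h1 h4 by simp
    qed
  next
    case False
    have h1: "hat \<rho> (W @ [b]) = 0" using H[of "W @ [b]"] False by auto
    have h2: "hat \<rho> W = 0" using H[of W] False W by auto
    show ?thesis unfolding h1 h2 by simp
  qed
qed

context sm
begin

lemma Mk:
  assumes M: "is_markov_measure C P v (distr \<nu> seqM (higher_block k))" and k: "k \<ge> 1"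
    and w: "length w = k"
  shows "p (u @ w @ [a]) * p w = p (u @ w) * p (w @ [a])"
proof -
  let ?H = "hat (distr \<nu> seqM (higher_block k))"
  let ?z = "u @ w"
  have lz: "length ?z \<ge> k" using w by simp
  have dz: "drop (Suc (length ?z) - k) (?z @ [a]) = drop 1 (w @ [a])"
    using w k by (simp add: Suc_diff_le)
  have bz: "blocks k (?z @ [a]) = blocks k ?z @ [drop 1 (w @ [a])]"
    using blocks_snoc[OF k lz, of a] dz by simp
  have ne: "blocks k ?z \<noteq> []" using lz k by (simp add: blocks_def)
  have lb: "last (blocks k ?z) = w"
  proof -
    have "last (blocks k ?z) = blocks k ?z ! (length u)"
      using ne w k by (simp add: last_conv_nth)
    also have "... = take k (drop (length u) ?z)" using w k by (simp add: nth_blocks)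
    finally show ?thesis using w by simp
  qed
  have bw: "blocks k (w @ [a]) = [w, drop 1 (w @ [a])]"
    using blocks_snoc[OF k, of w a] w k blocks_single[OF w k] by (simp add: Suc_diff_le)
  have "?H (blocks k ?z @ [drop 1 (w @ [a])]) * ?H [last (blocks k ?z)]
      = ?H (blocks k ?z) * ?H [last (blocks k ?z), drop 1 (w @ [a])]"
    by (rule markov_ident[OF M ne])
  then have "?H (blocks k (?z @ [a])) * ?H (blocks k w) = ?H (blocks k ?z) * ?H (blocks k (w @ [a]))"
    using bz lb bw blocks_single[OF w k] by simp
  moreover have "?H (blocks k (?z @ [a])) = p (u @ w @ [a])"
    using hat_rho_blocks[OF k, of "?z @ [a]"] lz by simp
  moreover have "?H (blocks k ?z) = p (u @ w)"
    using hat_rho_blocks[OF k, of "?z"] lz by simp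
  moreover have "?H (blocks k w) = p w"
    using hat_rho_blocks[OF k, of "w"] w by simp
  moreover have "?H (blocks k (w @ [a])) = p (w @ [a])"
    using hat_rho_blocks[OF k, of "w @ [a]"] w by simp
  ultimately show ?thesis by simp
qed

end

definition MI :: "('a list \<Rightarrow> real) \<Rightarrow> nat \<Rightarrow> bool" where
  "MI p k \<longleftrightarrow> (\<forall>u w a. length w = k \<longrightarrow> p (u @ w @ [a]) * p w = p (u @ w) * p (w @ [a]))"

context sm
begin

lemma MI_markov:
  assumes M: "is_markov_measure C P v (distr \<nu> seqM (higher_block k))" and k: "k \<ge> 1"
  shows "MI p k"
  unfolding MI_def using Mk[OF M k] by blast

end

context sm
begin

lemma split_sum:
  assumes S: "S \<in> sets seqM"
  shows "measure \<nu> S = (\<Sum>a\<in>UNIV. measure \<nu> {x \<in> S. x j = a})"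
proof -
  have "S = (\<Union>a\<in>UNIV. {x \<in> S. x j = a})" by auto
  moreover have "measure \<nu> (\<Union>a\<in>UNIV. {x \<in> S. x j = a}) = (\<Sum>a\<in>UNIV. measure \<nu> {x \<in> S. x j = a})"
  proof (rule finite_measure.finite_measure_finite_Union[OF fm])
    show "(\<lambda>a. {x \<in> S. x j = a}) ` UNIV \<subseteq> sets \<nu>"
    proof
      fix T assume "T \<in> (\<lambda>a. {x \<in> S. x j = a}) ` UNIV"
      then obtain a where "T = S \<inter> {x. x j = a}" by auto
      then show "T \<in> sets \<nu>" using sets.Int[OF S coord_set] sets_nu by simp
    qed
  qed (auto simp: disjoint_family_on_def)
  ultimately show ?thesis by simp
qed

lemma p_right: "p w = (\<Sum>a\<in>UNIV. p (w @ [a]))"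
proof -
  have "p w = (\<Sum>a\<in>UNIV. measure \<nu> {x \<in> cyl w. x (int (length w)) = a})"
    unfolding hat_def by (rule split_sum[OF cyl_sets])
  also have "... = (\<Sum>a\<in>UNIV. p (w @ [a]))"
    unfolding hat_def by (intro sum.cong refl arg_cong[where f="measure \<nu>"]) (auto simp: cyl_append)
  finally show ?thesis .
qed

lemma p_left: "p w = (\<Sum>a\<in>UNIV. p (a # w))"
proof -
  let ?S = "{x. \<forall>i<length w. x (int i + int 1) = w ! i}"
  have S: "?S \<in> sets seqM"
    using fin_set[of "{..<length w}" "\<lambda>i. int i + 1" "\<lambda>i. w ! i"] by (simp add: lessThan_def)
  have "p w = measure \<nu> ?S" using shifted_cyl2[of w 1] by simp
  also have "... = (\<Sum>a\<in>UNIV. measure \<nu> {x \<in> ?S. x 0 = a})"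
    by (rule split_sum[OF S])
  also have "... = (\<Sum>a\<in>UNIV. p (a # w))"
  proof (intro sum.cong refl)
    fix a
    have "cyl ([a] @ w) = {x \<in> ?S. x 0 = a}" unfolding cyl_append by (auto simp: cyl_def)
    then show "measure \<nu> {x \<in> ?S. x 0 = a} = p (a # w)" unfolding hat_def by simp
  qed
  finally show ?thesis .
qed

lemma Mk_ext:
  assumes M: "MI p k" and k: "k \<ge> 1"
    and w: "length w = k"
  shows "p (u @ w @ s) * p w = p (u @ w) * p (w @ s)"
proof (induction s rule: rev_induct)
  case Nil
  then show ?case by simp
next
  case (snoc a s)
  define y where "y = take (length (w @ s) - k) (w @ s)"
  define w' where "w' = drop (length (w @ s) - k) (w @ s)"
  have yw: "y @ w' = w @ s" unfolding y_def w'_def by (rule append_take_drop_id)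
  have lw': "length w' = k" using w by (simp add: w'_def)
  have m1: "p ((u @ y) @ w' @ [a]) * p w' = p ((u @ y) @ w') * p (w' @ [a])"
    using M lw' unfolding MI_def by blast
  have m2: "p (y @ w' @ [a]) * p w' = p (y @ w') * p (w' @ [a])"
    using M lw' unfolding MI_def by blast
  have e1: "(u @ y) @ w' @ [a] = u @ w @ s @ [a]" using yw by (metis append.assoc)
  have e2: "(u @ y) @ w' = u @ w @ s" using yw by simp
  have e3: "y @ w' @ [a] = w @ s @ [a]" using yw by (metis append.assoc)
  have m1': "p (u @ w @ s @ [a]) * p w' = p (u @ w @ s) * p (w' @ [a])" using m1 by (simp only: e1 e2)
  have m2': "p (w @ s @ [a]) * p w' = p (w @ s) * p (w' @ [a])" using m2 by (simp only: e3 yw)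
  show ?case
  proof (cases "p w' = 0")
    case True
    have "p ((u @ y) @ w' @ [a]) \<le> p w'" by (rule p_mono_mid)
    then have z1: "p (u @ w @ s @ [a]) = 0" using True p_nonneg e1 by (metis order_antisym)
    have "p (y @ w' @ [a]) \<le> p w'" by (rule p_mono_mid)
    then have z2: "p (w @ s @ [a]) = 0" using True p_nonneg e3 by (metis order_antisym)
    show ?thesis using z1 z2 by simp
  next
    case False
    have "p (u @ w @ s @ [a]) * p w * p w' = p (u @ w @ s) * p w * p (w' @ [a])"
      using m1' by (simp add: algebra_simps)
    also have "... = p (u @ w) * p (w @ s) * p (w' @ [a])" using snoc by simp
    also have "... = p (u @ w) * p (w @ s @ [a]) * p w'" using m2' by (simp add: algebra_simps)
    finally show ?thesis using False by simp
  qed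
qed

lemma Zk:
  assumes M: "MI p k" and k: "k \<ge> 1"
    and w: "length w = k"
  shows "p (u1 @ w @ s1) * p (u2 @ w @ s2) = p (u1 @ w @ s2) * p (u2 @ w @ s1)"
proof (cases "p w = 0")
  case True
  have z: "p (u @ w @ s) = 0" for u s
    using p_mono_mid[of u w s] True p_nonneg[of "u @ w @ s"] by simp
  show ?thesis by (simp add: z)
next
  case False
  have e: "p (u @ w @ s) = p (u @ w) * p (w @ s) / p w" for u s
    using Mk_ext[OF M k w, of u s] False by (simp add: field_simps)
  show ?thesis unfolding e by (simp add: field_simps)
qed

end

context sm
begin

lemma p_left_iter: "(\<Sum>w\<in>{w::'a list. length w = n}. p (w @ x)) = p x"
proof (induction n)
  case 0
  have "{w::'a list. length w = 0} = {[]}" by auto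
  then show ?case by simp
next
  case (Suc n)
  let ?S = "{w::'a list. length w = n}"
  have fS: "finite ?S" using finite_lists_length_eq[of "UNIV::'a set" n] by simp
  have e: "{w::'a list. length w = Suc n} = (\<lambda>(w,a). a # w) ` (?S \<times> UNIV)"
    by (auto simp: length_Suc_conv image_iff)
  have inj: "inj_on (\<lambda>(w,a). a # w) (?S \<times> (UNIV::'a set))" by (auto simp: inj_on_def)
  have "(\<Sum>w\<in>{w::'a list. length w = Suc n}. p (w @ x)) = (\<Sum>(w,a)\<in>?S \<times> UNIV. p (a # w @ x))"
    unfolding e by (subst sum.reindex[OF inj]) (simp add: case_prod_unfold)
  also have "... = (\<Sum>w\<in>?S. \<Sum>a\<in>UNIV. p (a # (w @ x)))"
    by (subst sum.cartesian_product) simp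
  also have "... = (\<Sum>w\<in>?S. p (w @ x))" by (simp add: p_left[symmetric])
  finally show ?case using Suc by simp
qed

lemma rep_exists:
  assumes M: "MI p k" and k: "k \<ge> 1"
  shows "\<exists>lam Phi gam. lin_rep p (card {w::'a list. length w = k}) lam Phi gam"
proof -
  let ?S = "{w::'a list. length w = k}"
  define d where "d = card ?S"
  have fS: "finite ?S" using finite_lists_length_eq[of "UNIV::'a set" k] by simp
  obtain ws where ws: "distinct ws" "set ws = ?S" using finite_distinct_list[OF fS] by blast
  have lws: "length ws = d" using ws distinct_card[OF ws(1)] by (simp add: d_def)
  have wsk: "\<And>i. i < d \<Longrightarrow> length (ws ! i) = k" using ws lws nth_mem by fastforce
  define q where "q w a = p (w @ [a]) / p w" for w a
  define Phi1 where "Phi1 a = mat d d (\<lambda>(i,j). if ws ! j = tl (ws ! i) @ [a] then q (ws ! i) a else 0)" for a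
  define Phi where "Phi x = foldr (\<lambda>a M. Phi1 a * M) x (1\<^sub>m d)" for x
  define lam where "lam = vec d (\<lambda>i. p (ws ! i))"
  define g where "g x = vec d (\<lambda>i. p (ws ! i @ x) / p (ws ! i))" for x
  define gam where "gam = g []"
  have P1: "Phi1 a \<in> carrier_mat d d" for a by (simp add: Phi1_def)
  have PC: "Phi x \<in> carrier_mat d d" for x
    by (induction x) (auto simp: Phi_def P1 intro!: mult_carrier_mat[OF P1])
  have Pnil: "Phi [] = 1\<^sub>m d" by (simp add: Phi_def)
  have Pcons: "Phi (a # x) = Phi1 a * Phi x" for a x by (simp add: Phi_def)
  have Papp: "Phi (u @ w) = Phi u * Phi w" for u w
  proof (induction u)
    case Nil
    then show ?case using PC[of w] by (simp add: Pnil)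
  next
    case (Cons a u)
    then show ?case using PC[of u] PC[of w] P1[of a]
      by (simp add: Pcons assoc_mult_mat[of _ d d _ d _ d])
  qed
  have gC: "g x \<in> carrier_vec d" for x by (simp add: g_def)
  have key: "Phi1 a *\<^sub>v g x = g (a # x)" for a x
  proof (rule eq_vecI)
    show "dim_vec (Phi1 a *\<^sub>v g x) = dim_vec (g (a # x))" by (simp add: Phi1_def g_def)
    fix i assume "i < dim_vec (g (a # x))"
    then have i: "i < d" by (simp add: g_def)
    define w where "w = ws ! i"
    have lw: "length w = k" using wsk[OF i] by (simp add: w_def)
    define t where "t = tl w @ [a]"
    have lt: "length t = k" using lw k by (simp add: t_def)
    then have "t \<in> set ws" using ws by simp
    then obtain j0 where j0: "j0 < d" "ws ! j0 = t" using lws by (auto simp: in_set_conv_nth)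
    have uniq: "\<And>j. j < d \<Longrightarrow> ws ! j = t \<longleftrightarrow> j = j0"
      using j0 ws(1) lws nth_eq_iff_index_eq by metis
    have "(Phi1 a *\<^sub>v g x) $ i = (\<Sum>j\<in>{0..<d}. Phi1 a $$ (i, j) * g x $ j)"
      using i by (simp add: Phi1_def scalar_prod_def g_def)
    also have "... = (\<Sum>j\<in>{0..<d}. if j = j0 then q w a * g x $ j0 else 0)"
    proof (intro sum.cong refl)
      fix j assume "j \<in> {0..<d}"
      then have j: "j < d" by simp
      have "Phi1 a $$ (i, j) = (if ws ! j = t then q w a else 0)"
        using i j by (simp add: Phi1_def w_def t_def)
      then show "Phi1 a $$ (i, j) * g x $ j = (if j = j0 then q w a * g x $ j0 else 0)"
        using uniq[OF j] by auto
    qed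
    also have "... = q w a * (p (t @ x) / p t)"
      using j0 by (simp add: g_def)
    also have "... = p (w @ a # x) / p w"
    proof -
      have hw: "w = [hd w] @ tl w" using lw k by (cases w) auto
      have wa: "[hd w] @ t = w @ [a]" using hw by (simp add: t_def)
      have E: "p ([hd w] @ t @ x) * p t = p ([hd w] @ t) * p (t @ x)"
        by (rule Mk_ext[OF M k lt])
      have wax: "[hd w] @ t @ x = w @ a # x" using wa by (metis append.assoc append_Cons append_Nil)
      show ?thesis
      proof (cases "p t = 0")
        case True
        have "p ([hd w] @ t) \<le> p t" by (rule p_mono_left)
        then have z1: "p (w @ [a]) = 0" using True p_nonneg wa by (metis order_antisym)
        have "p ([hd w] @ t @ x) \<le> p t" by (rule p_mono_mid)
        then have z2: "p (w @ a # x) = 0" using True p_nonneg wax by (metis order_antisym)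
        show ?thesis by (simp add: q_def z1 z2)
      next
        case False
        have e: "p (w @ [a]) * p (t @ x) = p (w @ a # x) * p t" using E by (simp only: wa wax)
        have "q w a * (p (t @ x) / p t) = (p (w @ [a]) * p (t @ x)) / (p w * p t)"
          by (simp add: q_def)
        also have "... = (p (w @ a # x) * p t) / (p w * p t)" by (simp only: e)
        also have "... = p (w @ a # x) / p w" using False by simp
        finally show ?thesis .
      qed
    qed
    also have "... = g (a # x) $ i" using i by (simp add: g_def w_def)
    finally show "(Phi1 a *\<^sub>v g x) $ i = g (a # x) $ i" .
  qed
  have Pg: "Phi x *\<^sub>v gam = g x" for x
  proof (induction x)
    case Nil
    then show ?case by (simp add: Pnil gam_def gC)
  next
    case (Cons a x)
    have "Phi (a # x) *\<^sub>v gam = Phi1 a *\<^sub>v (Phi x *\<^sub>v gam)"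
      unfolding Pcons using P1[of a] PC[of x] by (simp add: assoc_mult_mat_vec gam_def gC)
    then show ?case using Cons key by simp
  qed
  have rep: "p x = lam \<bullet> (Phi x *\<^sub>v gam)" for x
  proof -
    have "lam \<bullet> (Phi x *\<^sub>v gam) = (\<Sum>i\<in>{0..<d}. p (ws ! i) * (p (ws ! i @ x) / p (ws ! i)))"
      unfolding Pg by (simp add: lam_def g_def scalar_prod_def)
    also have "... = (\<Sum>i\<in>{0..<d}. p (ws ! i @ x))"
    proof (intro sum.cong refl)
      fix i
      show "p (ws ! i) * (p (ws ! i @ x) / p (ws ! i)) = p (ws ! i @ x)"
      proof (cases "p (ws ! i) = 0")
        case True
        then have "p (ws ! i @ x) = 0" using p_mono_right[of "ws ! i" x] p_nonneg[of "ws ! i @ x"] by simp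
        then show ?thesis by simp
      qed simp
    qed
    also have "... = sum_list (map (\<lambda>w. p (w @ x)) ws)"
      using lws by (simp add: sum_list_sum_nth atLeast0LessThan)
    also have "... = (\<Sum>w\<in>?S. p (w @ x))"
      using ws by (simp add: sum_list_distinct_conv_sum_set)
    also have "... = p x" by (rule p_left_iter)
    finally show ?thesis by simp
  qed
  have "lin_rep p d lam Phi gam"
    unfolding lin_rep_def
  proof (intro conjI allI)
    show "lam \<in> carrier_vec d" by (simp add: lam_def)
    show "gam \<in> carrier_vec d" by (simp add: gam_def gC)
  qed (use PC Pnil Papp rep in auto)
  then show ?thesis by (auto simp: d_def)
qed

end

section \<open>Linear algebra: the chain argument\<close>

definition fsc :: "real \<Rightarrow> ('x \<Rightarrow> real) \<Rightarrow> ('x \<Rightarrow> real)" where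
  "fsc r f = (\<lambda>x. r * f x)"

interpretation fs: vector_space fsc
  by unfold_locales (auto simp: fsc_def fun_eq_iff algebra_simps)

lemma sum_fun_app: "(\<Sum>i\<in>A. F i) x = (\<Sum>i\<in>A. F i x)"
  by (induction A rule: infinite_finite_induct) auto

definition Gfun :: "('a list \<Rightarrow> real) \<Rightarrow> 'a list \<Rightarrow> 'a list \<Rightarrow> 'a list \<Rightarrow> ('a list \<times> 'a list \<Rightarrow> real)" where
  "Gfun p w u1 u2 = (\<lambda>(s1, s2). p (u1 @ w @ s1) * p (u2 @ w @ s2) - p (u1 @ w @ s2) * p (u2 @ w @ s1))"

definition Gen :: "('a list \<Rightarrow> real) \<Rightarrow> nat \<Rightarrow> ('a list \<times> 'a list \<Rightarrow> real) set" where
  "Gen p j = {Gfun p w u1 u2 | w u1 u2. length w = j}"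

definition Tsh :: "'a \<Rightarrow> ('a list \<times> 'a list \<Rightarrow> real) \<Rightarrow> ('a list \<times> 'a list \<Rightarrow> real)" where
  "Tsh a f = (\<lambda>(s1, s2). f (a # s1, a # s2))"

lemma Gen_Suc_sub: "Gen p (Suc j) \<subseteq> Gen p j"
proof
  fix f assume "f \<in> Gen p (Suc j)"
  then obtain w u1 u2 where f: "f = Gfun p w u1 u2" "length w = Suc j" by (auto simp: Gen_def)
  then obtain a w' where w: "w = a # w'" "length w' = j" by (cases w) auto
  have "f = Gfun p w' (u1 @ [a]) (u2 @ [a])" using f w by (simp add: Gfun_def)
  then show "f \<in> Gen p j" using w by (auto simp: Gen_def)
qed

lemma Gen_mono: "j \<le> m \<Longrightarrow> Gen p m \<subseteq> Gen p j"
proof (induction m rule: dec_induct)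
  case base then show ?case by simp
next
  case (step m) then show ?case using Gen_Suc_sub[of p m] by blast
qed

lemma Gen_Suc_eq: "Gen p (Suc j) = (\<Union>a. Tsh a ` Gen p j)"
proof
  show "Gen p (Suc j) \<subseteq> (\<Union>a. Tsh a ` Gen p j)"
  proof
    fix f assume "f \<in> Gen p (Suc j)"
    then obtain w u1 u2 where f: "f = Gfun p w u1 u2" "length w = Suc j" by (auto simp: Gen_def)
    then obtain a w' where w: "w = w' @ [a]" "length w' = j"
      by (metis length_Suc_conv_rev)
    have "f = Tsh a (Gfun p w' u1 u2)" using f w by (simp add: Gfun_def Tsh_def fun_eq_iff)
    moreover have "Gfun p w' u1 u2 \<in> Gen p j" using w by (auto simp: Gen_def)
    ultimately show "f \<in> (\<Union>a. Tsh a ` Gen p j)" by blast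
  qed
next
  show "(\<Union>a. Tsh a ` Gen p j) \<subseteq> Gen p (Suc j)"
  proof
    fix f assume "f \<in> (\<Union>a. Tsh a ` Gen p j)"
    then obtain a w u1 u2 where f: "f = Tsh a (Gfun p w u1 u2)" "length w = j" by (auto simp: Gen_def)
    have e: "f = Gfun p (w @ [a]) u1 u2" using f by (simp add: Gfun_def Tsh_def fun_eq_iff)
    have "length (w @ [a]) = Suc j" using f by simp
    then show "f \<in> Gen p (Suc j)" using e unfolding Gen_def by blast
  qed
qed

lemma span_T:
  assumes "X \<subseteq> fs.span Y"
  shows "fs.span (\<Union>a. Tsh a ` X) \<subseteq> fs.span (\<Union>a. Tsh a ` Y)"
proof -
  let ?R = "fs.span (\<Union>a. Tsh a ` Y)"
  have sub: "fs.subspace {x. \<forall>a. Tsh a x \<in> ?R}"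
    unfolding fs.subspace_def
  proof (intro conjI ballI allI)
    show "0 \<in> {x. \<forall>a. Tsh a x \<in> ?R}" using fs.span_zero by (simp add: Tsh_def zero_fun_def case_prod_unfold)
  next
    fix x y assume x: "x \<in> {x. \<forall>a. Tsh a x \<in> ?R}" and y: "y \<in> {x. \<forall>a. Tsh a x \<in> ?R}"
    show "x + y \<in> {x. \<forall>a. Tsh a x \<in> ?R}"
    proof (intro CollectI allI)
      fix a
      have "Tsh a (x + y) = Tsh a x + Tsh a y" by (simp add: Tsh_def fun_eq_iff)
      moreover have "Tsh a x \<in> ?R" "Tsh a y \<in> ?R" using x y by auto
      ultimately show "Tsh a (x + y) \<in> ?R" using fs.span_add by metis
    qed
  next
    fix c x assume x: "x \<in> {x. \<forall>a. Tsh a x \<in> ?R}"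
    show "fsc c x \<in> {x. \<forall>a. Tsh a x \<in> ?R}"
    proof (intro CollectI allI)
      fix a
      have "Tsh a (fsc c x) = fsc c (Tsh a x)" by (simp add: Tsh_def fsc_def fun_eq_iff)
      then show "Tsh a (fsc c x) \<in> ?R" using x fs.span_scale by auto
    qed
  qed
  have "Y \<subseteq> {x. \<forall>a. Tsh a x \<in> ?R}" by (auto intro: fs.span_base)
  then have "fs.span Y \<subseteq> {x. \<forall>a. Tsh a x \<in> ?R}" by (rule fs.span_minimal[OF _ sub])
  then have "(\<Union>a. Tsh a ` X) \<subseteq> ?R" using assms by blast
  then show ?thesis by (rule fs.span_minimal[OF _ fs.subspace_span])
qed

lemma V_step:
  assumes "fs.span (Gen p (Suc j)) = fs.span (Gen p j)"
  shows "fs.span (Gen p (Suc (Suc j))) = fs.span (Gen p (Suc j))"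
proof -
  have 1: "Gen p (Suc j) \<subseteq> fs.span (Gen p j)"
    using fs.span_superset[of "Gen p (Suc j)"] unfolding assms .
  have 2: "Gen p j \<subseteq> fs.span (Gen p (Suc j))"
    using fs.span_superset[of "Gen p j"] unfolding assms[symmetric] .
  have e1: "Gen p (Suc (Suc j)) = (\<Union>a. Tsh a ` Gen p (Suc j))" by (rule Gen_Suc_eq)
  have e2: "Gen p (Suc j) = (\<Union>a. Tsh a ` Gen p j)" by (rule Gen_Suc_eq)
  have A: "fs.span (Gen p (Suc (Suc j))) = fs.span (\<Union>a. Tsh a ` Gen p (Suc j))" by (simp only: e1)
  have B: "fs.span (Gen p (Suc j)) = fs.span (\<Union>a. Tsh a ` Gen p j)" by (simp only: e2)
  have C: "fs.span (\<Union>a. Tsh a ` Gen p (Suc j)) = fs.span (\<Union>a. Tsh a ` Gen p j)"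
    using span_T[OF 1] span_T[OF 2] by (rule subset_antisym)
  show ?thesis by (simp only: A B C)
qed

lemma V_stable:
  assumes "fs.span (Gen p (Suc i)) = fs.span (Gen p i)"
  shows "fs.span (Gen p (i + m)) = fs.span (Gen p i)"
proof -
  have "fs.span (Gen p (Suc (i + m))) = fs.span (Gen p (i + m)) \<and> fs.span (Gen p (i + m)) = fs.span (Gen p i)"
  proof (induction m)
    case 0 then show ?case using assms by simp
  next
    case (Suc m)
    have "fs.span (Gen p (Suc (Suc (i + m)))) = fs.span (Gen p (Suc (i + m)))"
      using V_step[OF conjunct1[OF Suc.IH]] .
    then show ?case using Suc by simp
  qed
  then show ?thesis by blast
qed

lemma dim_strict:
  assumes ss: "fs.span A \<subset> fs.span B" and BE: "B \<subseteq> fs.span E" and fE: "finite E"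
  shows "fs.dim A < fs.dim B"
proof -
  obtain BA where BA: "BA \<subseteq> A" "fs.independent BA" "A \<subseteq> fs.span BA" "card BA = fs.dim A"
    using fs.basis_exists by blast
  obtain BB where BB: "BB \<subseteq> B" "fs.independent BB" "B \<subseteq> fs.span BB" "card BB = fs.dim B"
    using fs.basis_exists by blast
  have sBB: "fs.span B \<subseteq> fs.span BB" using fs.span_minimal[OF BB(3) fs.subspace_span] .
  have spanBA: "fs.span BA = fs.span A"
  proof (rule subset_antisym)
    show "fs.span BA \<subseteq> fs.span A" using fs.span_mono[OF BA(1)] .
    show "fs.span A \<subseteq> fs.span BA" using fs.span_minimal[OF BA(3) fs.subspace_span] .
  qed
  obtain x where x: "x \<in> fs.span B" "x \<notin> fs.span A" using ss by blast
  have BBE: "BB \<subseteq> fs.span E" using BB BE by blast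
  have fBB: "finite BB" using fs.independent_span_bound[OF fE BB(2) BBE] by blast
  have "A \<subseteq> fs.span B" using ss fs.span_superset by blast
  then have "BA \<subseteq> fs.span BB" using BA(1) sBB by blast
  then have fBA: "finite BA" using fs.independent_span_bound[OF fBB BA(2)] by blast
  have xBA: "x \<notin> BA" using x BA fs.span_superset by blast
  have ind: "fs.independent (insert x BA)"
    using fs.independent_insert[of x BA] BA(2) x spanBA xBA by simp
  have "insert x BA \<subseteq> fs.span BB"
    using x(1) sBB \<open>BA \<subseteq> fs.span BB\<close> by blast
  then have "card (insert x BA) \<le> card BB" using fs.independent_span_bound[OF fBB ind] by blast
  then show ?thesis using BA BB fBA xBA by simp
qed

lemma chain:
  assumes E: "Gen p 0 \<subseteq> fs.span E" "finite E" "card E \<le> N"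
    and Zk: "Gen p k \<subseteq> {0}"
  shows "Gen p N \<subseteq> {0}"
proof -
  let ?V = "\<lambda>j. fs.span (Gen p j)"
  have VE: "Gen p j \<subseteq> fs.span E" for j using Gen_mono[of 0 j p] E by blast
  have ex: "\<exists>i\<le>N. ?V (Suc i) = ?V i"
  proof (rule ccontr)
    assume H: "\<not> (\<exists>i\<le>N. ?V (Suc i) = ?V i)"
    have strict: "fs.dim (Gen p (Suc i)) < fs.dim (Gen p i)" if "i \<le> N" for i
    proof (rule dim_strict[OF _ VE E(2)])
      show "?V (Suc i) \<subset> ?V i" using H that fs.span_mono[OF Gen_Suc_sub[of p i]] by blast
    qed
    have bound: "fs.dim (Gen p i) + i \<le> N" if "i \<le> N" for i
      using that
    proof (induction i)
      case 0
      have "fs.dim (Gen p 0) \<le> card E" using fs.dim_le_card[OF E(1) E(2)] .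
      then show ?case using E(3) by simp
    next
      case (Suc i)
      then show ?case using strict[of i] by simp
    qed
    have "fs.dim (Gen p N) = 0" using bound[of N] by simp
    then show False using strict[of N] by simp
  qed
  then obtain i where i: "i \<le> N" "?V (Suc i) = ?V i" by blast
  have st: "?V (i + k) = ?V i" by (rule V_stable[OF i(2)])
  have "Gen p (i + k) \<subseteq> {0}" using Gen_mono[of k "i + k" p] Zk by auto
  then have "?V (i + k) \<subseteq> fs.span {0}" by (rule fs.span_mono)
  moreover have "fs.span {0::'a list \<times> 'a list \<Rightarrow> real} = {0}"
    using fs.span_insert_0[of "{}"] fs.span_empty by simp
  ultimately have "?V i \<subseteq> {0}" using st by simp
  then have "Gen p i \<subseteq> {0}" using fs.span_superset by blast
  then show ?thesis using Gen_mono[OF i(1), of p] by blast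
qed

lemma p_split_rep:
  assumes R: "lin_rep p n lam Phi gam"
  shows "p (u @ s) = (\<Sum>i\<in>{0..<n}. (\<Sum>j\<in>{0..<n}. lam $ j * Phi u $$ (j, i)) * (Phi s *\<^sub>v gam) $ i)"
proof -
  have lam: "lam \<in> carrier_vec n" and gam: "gam \<in> carrier_vec n"
    and PC: "\<And>w. Phi w \<in> carrier_mat n n" and Papp: "\<And>u w. Phi (u @ w) = Phi u * Phi w"
    and rep: "\<And>w. p w = lam \<bullet> (Phi w *\<^sub>v gam)"
    using R by (auto simp: lin_rep_def)
  define g where "g = Phi s *\<^sub>v gam"
  have gC: "g \<in> carrier_vec n" using PC[of s] gam by (simp add: g_def)
  have "p (u @ s) = lam \<bullet> (Phi u *\<^sub>v g)"
    unfolding rep Papp g_def using PC[of u] PC[of s] gam by (simp add: assoc_mult_mat_vec)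
  also have "... = (\<Sum>j\<in>{0..<n}. lam $ j * (\<Sum>i\<in>{0..<n}. Phi u $$ (j, i) * g $ i))"
    using PC[of u] gC by (simp add: scalar_prod_def)
  also have "... = (\<Sum>j\<in>{0..<n}. \<Sum>i\<in>{0..<n}. lam $ j * Phi u $$ (j, i) * g $ i)"
    by (simp add: sum_distrib_left mult.assoc)
  also have "... = (\<Sum>i\<in>{0..<n}. \<Sum>j\<in>{0..<n}. lam $ j * Phi u $$ (j, i) * g $ i)"
    by (rule sum.swap)
  also have "... = (\<Sum>i\<in>{0..<n}. (\<Sum>j\<in>{0..<n}. lam $ j * Phi u $$ (j, i)) * g $ i)"
    by (simp add: sum_distrib_right)
  finally show ?thesis by (simp add: g_def)
qed

lemma gen0_span:
  assumes R: "lin_rep p n lam Phi gam"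
  shows "\<exists>E. Gen p 0 \<subseteq> fs.span E \<and> finite E \<and> card E \<le> n * n"
proof -
  define c where "c u i = (\<Sum>j\<in>{0..<n}. lam $ j * Phi u $$ (j, i))" for u i
  define e where "e s i = (Phi s *\<^sub>v gam) $ i" for s i
  define Ef where "Ef = (\<lambda>(i::nat, l::nat). (\<lambda>(s1, s2). e s1 i * e s2 l))"
  define I where "I = {0..<n} \<times> {0..<n}"
  define E where "E = Ef ` I"
  have ps: "p (u @ s) = (\<Sum>i\<in>{0..<n}. c u i * e s i)" for u s
    using p_split_rep[OF R] by (simp add: c_def e_def)
  have "Gen p 0 \<subseteq> fs.span E"
  proof
    fix f assume "f \<in> Gen p 0"
    then obtain u1 u2 where f: "f = Gfun p [] u1 u2" by (auto simp: Gen_def)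
    have feq: "f = (\<Sum>il\<in>I. fsc (c u1 (fst il) * c u2 (snd il) - c u1 (snd il) * c u2 (fst il)) (Ef il))"
    proof (rule ext, clarify)
      fix s1 s2
      let ?a = "c u1" and ?b = "c u2" and ?x = "e s1" and ?y = "e s2"
      have 1: "(\<Sum>i\<in>{0..<n}. ?a i * ?x i) * (\<Sum>l\<in>{0..<n}. ?b l * ?y l)
          = (\<Sum>i\<in>{0..<n}. \<Sum>l\<in>{0..<n}. (?a i * ?x i) * (?b l * ?y l))"
        by (rule sum_product)
      have 2: "(\<Sum>l\<in>{0..<n}. ?a l * ?y l) * (\<Sum>i\<in>{0..<n}. ?b i * ?x i)
          = (\<Sum>i\<in>{0..<n}. \<Sum>l\<in>{0..<n}. (?b i * ?x i) * (?a l * ?y l))"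
        by (subst mult.commute) (rule sum_product)
      have "f (s1, s2) = p (u1 @ s1) * p (u2 @ s2) - p (u1 @ s2) * p (u2 @ s1)"
        by (simp add: f Gfun_def)
      also have "... = (\<Sum>i\<in>{0..<n}. \<Sum>l\<in>{0..<n}. (?a i * ?x i) * (?b l * ?y l))
                     - (\<Sum>i\<in>{0..<n}. \<Sum>l\<in>{0..<n}. (?b i * ?x i) * (?a l * ?y l))"
        unfolding ps 1 2 ..
      also have "... = (\<Sum>i\<in>{0..<n}. \<Sum>l\<in>{0..<n}. (?a i * ?b l - ?a l * ?b i) * (?x i * ?y l))"
        by (simp add: sum_subtractf[symmetric] algebra_simps)
      also have "... = (\<Sum>il\<in>I. (?a (fst il) * ?b (snd il) - ?a (snd il) * ?b (fst il)) * (?x (fst il) * ?y (snd il)))"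
        unfolding I_def by (subst sum.cartesian_product) (simp add: case_prod_unfold)
      also have "... = (\<Sum>il\<in>I. fsc (c u1 (fst il) * c u2 (snd il) - c u1 (snd il) * c u2 (fst il)) (Ef il)) (s1, s2)"
        by (simp add: sum_fun_app fsc_def Ef_def case_prod_unfold)
      finally show "f (s1, s2) = (\<Sum>il\<in>I. fsc (c u1 (fst il) * c u2 (snd il) - c u1 (snd il) * c u2 (fst il)) (Ef il)) (s1, s2)" .
    qed
    show "f \<in> fs.span E"
      unfolding feq
      by (intro fs.span_sum fs.span_scale fs.span_base) (simp add: E_def)
  qed
  moreover have "finite E" by (simp add: E_def I_def)
  moreover have "card E \<le> n * n"
    using card_image_le[of I Ef] by (simp add: E_def I_def card_cartesian_product)
  ultimately show ?thesis by blast
qed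

lemma vpos:
  assumes D: "markov_data C P v" and a: "a \<in> C"
  shows "v a > 0"
proof (rule ccontr)
  assume "\<not> v a > 0"
  then have va: "v a = 0" using D a by (force simp: markov_data_def)
  let ?R = "{(a, b). a \<in> C \<and> b \<in> C \<and> P a b > 0}"
  have fC: "finite C" and nn: "\<forall>a\<in>C. \<forall>b\<in>C. P a b \<ge> 0" and irr: "\<forall>a\<in>C. \<forall>b\<in>C. (a, b) \<in> ?R\<^sup>+"
    and vnn: "\<forall>a\<in>C. v a \<ge> 0" and vs: "(\<Sum>a\<in>C. v a) = 1"
    and st: "\<forall>b\<in>C. (\<Sum>a\<in>C. v a * P a b) = v b"
    using D by (auto simp: markov_data_def)
  have bk: "v x = 0" if "(x, y) \<in> ?R" "v y = 0" for x y
  proof -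
    have x: "x \<in> C" and y: "y \<in> C" and pxy: "P x y > 0" using that by auto
    have "v x * P x y \<le> (\<Sum>a\<in>C. v a * P a y)"
      by (rule member_le_sum[OF x]) (use vnn nn y fC in auto)
    then have "v x * P x y \<le> 0" using st y that(2) by simp
    moreover have "v x * P x y \<ge> 0" using vnn nn x y by simp
    ultimately have "v x * P x y = 0" by simp
    then show ?thesis using pxy by simp
  qed
  have "v x = 0" if "(x, a) \<in> ?R\<^sup>+" for x
    using that
  proof (induction rule: converse_trancl_induct)
    case (base y) then show ?case using bk va by blast
  next
    case (step y z) then show ?case using bk by blast
  qed
  then have "\<forall>x\<in>C. v x = 0" using irr a by blast
  then have "(\<Sum>a\<in>C. v a) = 0" by simp
  then show False using vs by simp
qed

context sm
begin

lemma ext_right: "p x > 0 \<Longrightarrow> \<exists>t. length t = m \<and> p (x @ t) > 0"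
proof (induction m)
  case 0 then show ?case by (intro exI[of _ "[]"]) simp
next
  case (Suc m)
  then obtain t where t: "length t = m" "p (x @ t) > 0" by blast
  have "\<exists>a. p ((x @ t) @ [a]) > 0"
  proof (rule ccontr)
    assume "\<not> (\<exists>a. p ((x @ t) @ [a]) > 0)"
    then have "(\<Sum>a\<in>UNIV. p ((x @ t) @ [a])) \<le> 0" by (intro sum_nonpos) (simp add: not_less)
    then show False using t p_right[of "x @ t"] by simp
  qed
  then obtain a where "p ((x @ t) @ [a]) > 0" by blast
  then show ?case using t by (intro exI[of _ "t @ [a]"]) simp
qed

lemma ext_left: "p y > 0 \<Longrightarrow> \<exists>t. length t = m \<and> p (t @ y) > 0"
proof (induction m)
  case 0 then show ?case by (intro exI[of _ "[]"]) simp
next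
  case (Suc m)
  then obtain t where t: "length t = m" "p (t @ y) > 0" by blast
  have "\<exists>a. p (a # (t @ y)) > 0"
  proof (rule ccontr)
    assume "\<not> (\<exists>a. p (a # (t @ y)) > 0)"
    then have "(\<Sum>a\<in>UNIV. p (a # (t @ y))) \<le> 0" by (intro sum_nonpos) (simp add: not_less)
    then show False using t p_left[of "t @ y"] by simp
  qed
  then obtain a where "p (a # (t @ y)) > 0" by blast
  then show ?case using t by (intro exI[of _ "a # t"]) simp
qed

lemma pos_of_prod:
  assumes "p A * p B = p C * p D" "p C > 0" "p D > 0"
  shows "p A > 0"
proof -
  have "p A * p B > 0" using assms by simp
  then have "p A \<noteq> 0" by auto
  then show ?thesis using p_nonneg[of A] by simp
qed

lemma edge:
  assumes M: "is_markov_measure Ck Pk vk (distr \<nu> seqM (higher_block k))" and k: "k \<ge> 1"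
    and b: "b \<in> Ck" and c: "c \<in> Ck" and P: "Pk b c > 0"
  shows "length b = k \<and> (\<exists>a. p (b @ [a]) > 0 \<and> b @ [a] = [hd b] @ c)"
proof -
  let ?H = "hat (distr \<nu> seqM (higher_block k))"
  have D: "markov_data Ck Pk vk" using M by (simp add: is_markov_measure_def)
  have H: "?H [b, c] = vk b * Pk b c"
    using M b c by (simp add: is_markov_measure_def)
  have pos: "?H [b, c] > 0" using H vpos[OF D b] P by simp
  have "\<exists>z. length z \<ge> k \<and> [b, c] = blocks k z"
  proof (rule ccontr)
    assume "\<not> (\<exists>z. length z \<ge> k \<and> [b, c] = blocks k z)"
    then have "?H [b, c] = 0" by (intro hat_rho_zero) auto
    then show False using pos by simp
  qed
  then obtain z where z: "length z \<ge> k" "[b, c] = blocks k z" by blast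
  have lz: "length z = Suc k"
  proof -
    have "length [b, c] = length (blocks k z)" using z(2) by simp
    then show ?thesis using z(1) by simp
  qed
  have bz: "b = take k z"
  proof -
    have "b = [b, c] ! 0" by simp
    also have "... = blocks k z ! 0" using z(2) by simp
    also have "... = take k z" by (rule nth_blocks[of 0 z k, simplified]) (use lz in simp)
    finally show ?thesis .
  qed
  have cz: "c = drop 1 z"
  proof -
    have "c = [b, c] ! 1" by simp
    also have "... = blocks k z ! 1" using z(2) by simp
    also have "... = take k (drop 1 z)" by (rule nth_blocks) (use lz k in simp)
    finally show ?thesis using lz by simp
  qed
  have pz: "p z > 0" using hat_rho_blocks[OF k z(1)] z(2) pos by simp
  define a where "a = last z"
  have zb: "z = b @ [a]"
  proof -
    have "z \<noteq> []" using lz by auto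
    then have "z = butlast z @ [last z]" by simp
    moreover have "butlast z = take k z" using lz by (simp add: butlast_conv_take)
    ultimately show ?thesis using bz a_def by simp
  qed
  have lb: "length b = k" using bz lz by simp
  have "b \<noteq> []" using lb k by auto
  then have "[hd b] @ c = b @ [a]" using cz zb by (cases b) auto
  then show ?thesis using lb pz zb by auto
qed

lemma path:
  assumes M: "is_markov_measure Ck Pk vk (distr \<nu> seqM (higher_block k))" and k: "k \<ge> 1"
    and R: "(c, c') \<in> {(a, b). a \<in> Ck \<and> b \<in> Ck \<and> Pk a b > 0}\<^sup>+"
    and pu: "p (u @ c) > 0"
  shows "\<exists>r r'. p (u @ c @ r) > 0 \<and> c @ r = r' @ c'"
  using R
proof (induction rule: trancl_induct)
  case (base y)
  then have b: "c \<in> Ck" "y \<in> Ck" "Pk c y > 0" by auto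
  obtain a where lc: "length c = k" and a: "p (c @ [a]) > 0" "c @ [a] = [hd c] @ y"
    using edge[OF M k b] by blast
  have "p (u @ c @ [a]) * p c = p (u @ c) * p (c @ [a])"
    using MI_markov[OF M k] lc by (simp add: MI_def)
  then have "p (u @ c @ [a]) > 0" using pos_of_prod pu a by blast
  then show ?case using a by blast
next
  case (step y z)
  then obtain r r' where rr: "p (u @ c @ r) > 0" "c @ r = r' @ y" by blast
  have b: "y \<in> Ck" "z \<in> Ck" "Pk y z > 0" using step by auto
  obtain a where ly: "length y = k" and a: "p (y @ [a]) > 0" "y @ [a] = [hd y] @ z"
    using edge[OF M k b] by blast
  have e0: "p ((u @ r') @ y @ [a]) * p y = p ((u @ r') @ y) * p (y @ [a])"
    using MI_markov[OF M k] ly unfolding MI_def by blast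
  have e1: "(u @ r') @ y = u @ c @ r" using rr by simp
  have e2: "(u @ r') @ y @ [a] = u @ c @ (r @ [a])" using rr by simp
  have e: "p (u @ c @ (r @ [a])) * p y = p (u @ c @ r) * p (y @ [a])"
    using e0 unfolding e1 e2 .
  have P1: "p (u @ c @ (r @ [a])) > 0" by (rule pos_of_prod[OF e rr(1) a(1)])
  have P2: "c @ (r @ [a]) = (r' @ [hd y]) @ z" using rr(2) a(2) by (metis append.assoc append_Cons append_Nil)
  show ?case using P1 P2 by blast
qed

lemma IRR:
  assumes M: "is_markov_measure Ck Pk vk (distr \<nu> seqM (higher_block k))" and k: "k \<ge> 1"
    and x: "p x > 0" and y: "p y > 0"
  shows "\<exists>z. p (x @ z @ y) > 0"
proof -
  let ?H = "hat (distr \<nu> seqM (higher_block k))"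
  have H: "\<And>w. w \<noteq> [] \<Longrightarrow> ?H w = (if set w \<subseteq> Ck then vk (hd w) * (\<Prod>i<length w - 1. Pk (w ! i) (w ! Suc i)) else 0)"
    using M by (simp add: is_markov_measure_def)
  have D: "markov_data Ck Pk vk" using M by (simp add: is_markov_measure_def)
  obtain t where t: "length t = k" "p (x @ t) > 0" using ext_right[OF x] by blast
  obtain t' where t': "length t' = k" "p (t' @ y) > 0" using ext_left[OF y] by blast
  have inC: "w \<in> Ck" if "length w = k" "p w > 0" for w
  proof (rule ccontr)
    assume "w \<notin> Ck"
    then have "?H [w] = 0" using H[of "[w]"] by simp
    moreover have "?H [w] = p w" using hat_rho_blocks[OF k, of w] that blocks_single[OF that(1) k] by simp
    ultimately show False using that by simp
  qed
  have tC: "t \<in> Ck" using inC[OF t(1)] p_mono_left[of x t] t by simp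
  have t'C: "t' \<in> Ck" using inC[OF t'(1)] p_mono_right[of t' y] t' by simp
  have "(t, t') \<in> {(a, b). a \<in> Ck \<and> b \<in> Ck \<and> Pk a b > 0}\<^sup>+"
    using D tC t'C by (simp add: markov_data_def)
  from path[OF M k this t(2)] obtain r r' where rr: "p (x @ t @ r) > 0" "t @ r = r' @ t'" by blast
  have "p ((x @ r') @ t' @ y) * p t' = p ((x @ r') @ t') * p (t' @ y)"
    by (rule Mk_ext[OF MI_markov[OF M k] k t'(1)])
  then have e: "p ((x @ r') @ t' @ y) * p t' = p (x @ t @ r) * p (t' @ y)"
    using rr by simp
  have "p ((x @ r') @ t' @ y) > 0" by (rule pos_of_prod[OF e rr(1) t'(2)])
  then show ?thesis by (intro exI[of _ "r' @ t'"]) simp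
qed

end

lemma blocks_step:
  assumes K: "K \<ge> 1" and i: "Suc i < length (blocks K z)"
  shows "blocks K z ! Suc i \<noteq> [] \<and> butlast (blocks K z ! Suc i) = tl (blocks K z ! i) \<and>
         blocks K z ! i @ [last (blocks K z ! Suc i)] = take (Suc K) (drop i z)"
proof -
  obtain K' where K': "K = Suc K'" using K by (cases K) auto
  have len: "Suc (Suc (i + K')) \<le> length z" using i K' by simp
  obtain x D' where D: "drop i z = x # D'" using len by (cases "drop i z") auto
  have "length (drop i z) = Suc (length D')" using D by simp
  then have lD': "length D' \<ge> Suc K'" using len by simp
  have b0: "blocks K z ! i = x # take K' D'" using i D K' by (simp add: nth_blocks)
  have dS: "drop (Suc i) z = D'" using D by (metis drop_Suc list.sel(3) tl_drop)
  have b1: "blocks K z ! Suc i = take (Suc K') D'" using i dS K' by (simp add: nth_blocks)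
  have ne: "take (Suc K') D' \<noteq> []" using lD' by (cases D') auto
  have bl: "butlast (take (Suc K') D') = take K' D'" using lD' by (simp add: butlast_take)
  have tk: "take K' D' @ [D' ! K'] = take (Suc K') D'" using lD' by (simp add: take_Suc_conv_app_nth)
  have la: "last (take (Suc K') D') = D' ! K'" by (simp only: tk[symmetric] last_snoc)
  show ?thesis using b0 b1 ne bl la tk D K' by simp
qed

lemma blocks_prefix:
  assumes K: "K \<ge> 1" and W: "W \<noteq> []" and e: "W @ [b] = blocks K z'"
  shows "\<exists>z. length z \<ge> K \<and> W = blocks K z \<and> z' = z @ [last z'] \<and> b = drop (Suc (length z) - K) z'"
proof -
  have "length (W @ [b]) = length (blocks K z')" using e by simp
  then have lz': "length z' \<ge> Suc K" using W by (cases W) auto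
  define z where "z = butlast z'"
  have z': "z' = z @ [last z']" using lz' by (cases z' rule: rev_cases) (auto simp: z_def)
  have lz: "length z \<ge> K" using lz' by (simp add: z_def)
  have "blocks K z' = blocks K z @ [drop (Suc (length z) - K) (z @ [last z'])]"
    using blocks_snoc[OF K lz, of "last z'"] z' by simp
  then have "W @ [b] = blocks K z @ [drop (Suc (length z) - K) z']" using e z' by simp
  then show ?thesis using lz z' by auto
qed

lemma hd_blocks: "K \<le> length z \<Longrightarrow> hd (blocks K z) = take K z"
  by (simp add: blocks_def hd_map upt_conv_Cons)

lemma last_blocks: "K \<le> length z \<Longrightarrow> last (blocks K z) = drop (length z - K) z"
proof -
  assume a: "K \<le> length z"
  have ne: "blocks K z \<noteq> []" using a by (simp add: blocks_def)
  have "last (blocks K z) = blocks K z ! (length z - K)"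
    using ne a by (simp add: last_conv_nth Suc_diff_le)
  also have "... = take K (drop (length z - K) z)" using a by (simp add: nth_blocks Suc_diff_le)
  finally show ?thesis using a by simp
qed

lemma blocks_elem_split:
  assumes i: "i < length (blocks K z)"
  shows "length (blocks K z ! i) = K \<and> z = take i z @ blocks K z ! i @ drop (i + K) z"
proof -
  have le: "i + K \<le> length z" using i by simp
  have "blocks K z ! i = take K (drop i z)" using i by (simp add: nth_blocks)
  moreover have "z = take i z @ take K (drop i z) @ drop (i + K) z"
  proof -
    have "drop i z = take K (drop i z) @ drop K (drop i z)" by (rule append_take_drop_id[symmetric])
    also have "drop K (drop i z) = drop (i + K) z" by (simp add: add.commute)
    finally show ?thesis by (metis append_take_drop_id)
  qed
  ultimately show ?thesis using le by simp
qed

section \<open>Construction of the K-step Markov structure\<close>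

lemma prod_snoc:
  assumes W: "W \<noteq> []"
  shows "(\<Prod>i<length (W @ [b]) - 1. P ((W @ [b]) ! i) ((W @ [b]) ! Suc i))
     = (\<Prod>i<length W - 1. P (W ! i) (W ! Suc i)) * P (last W) b"
proof -
  define n where "n = length W - 1"
  have ln: "length W = Suc n" using W by (simp add: n_def)
  have lW: "last W = W ! n" using W by (simp add: n_def last_conv_nth)
  have "(\<Prod>i<length (W @ [b]) - 1. P ((W @ [b]) ! i) ((W @ [b]) ! Suc i))
      = (\<Prod>i<Suc n. P ((W @ [b]) ! i) ((W @ [b]) ! Suc i))" using ln by simp
  also have "... = (\<Prod>i<n. P ((W @ [b]) ! i) ((W @ [b]) ! Suc i)) * P ((W @ [b]) ! n) ((W @ [b]) ! Suc n)"
    by simp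
  also have "(\<Prod>i<n. P ((W @ [b]) ! i) ((W @ [b]) ! Suc i)) = (\<Prod>i<n. P (W ! i) (W ! Suc i))"
    using ln by (intro prod.cong) (auto simp: nth_append)
  also have "P ((W @ [b]) ! n) ((W @ [b]) ! Suc n) = P (last W) b"
    using ln lW by (simp add: nth_append)
  finally show ?thesis using ln by simp
qed

lemma sum_reindex_helper:
  fixes f :: "'c::finite \<Rightarrow> 'b" and g :: "'b \<Rightarrow> real"
  assumes T: "finite T" and inj: "inj f"
    and g0: "\<And>b. b \<in> T \<Longrightarrow> g b \<noteq> 0 \<Longrightarrow> b \<in> range f"
    and h0: "\<And>c. f c \<notin> T \<Longrightarrow> h c = 0"
    and gh: "\<And>c. f c \<in> T \<Longrightarrow> g (f c) = h c"
  shows "(\<Sum>b\<in>T. g b) = (\<Sum>c\<in>UNIV. h c)"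
proof -
  have "(\<Sum>b\<in>T. g b) = (\<Sum>b\<in>T \<inter> range f. g b)"
    by (rule sum.mono_neutral_right) (use T g0 in auto)
  also have "T \<inter> range f = f ` (f -` T)" by auto
  also have "(\<Sum>b\<in>f ` (f -` T). g b) = (\<Sum>c\<in>f -` T. g (f c))"
    using sum.reindex[of f "f -` T" g] inj by (simp add: inj_on_def)
  also have "... = (\<Sum>c\<in>f -` T. h c)" using gh by simp
  also have "... = (\<Sum>c\<in>UNIV. h c)"
    by (rule sum.mono_neutral_left) (use h0 in auto)
  finally show ?thesis .
qed

definition CKs :: "('a list \<Rightarrow> real) \<Rightarrow> nat \<Rightarrow> 'a list set" where
  "CKs p K = {w. length w = K \<and> p w > 0}"

definition PKs :: "('a list \<Rightarrow> real) \<Rightarrow> 'a list \<Rightarrow> 'a list \<Rightarrow> real" where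
  "PKs p w w' = (if w' \<noteq> [] \<and> butlast w' = tl w then p (w @ [last w']) / p w else 0)"

context sm
begin

lemma CK_fin: "finite (CKs p K)"
proof -
  have "CKs p K \<subseteq> {w::'a list. length w = K}" by (auto simp: CKs_def)
  moreover have "finite {w::'a list. length w = K}"
    using finite_lists_length_eq[of "UNIV::'a set" K] by simp
  ultimately show ?thesis by (rule finite_subset)
qed

lemma CK_sum: "(\<Sum>w\<in>CKs p K. p w) = 1"
proof -
  have fS: "finite {w::'a list. length w = K}"
    using finite_lists_length_eq[of "UNIV::'a set" K] by simp
  have "(\<Sum>w\<in>{w::'a list. length w = K}. p w) = 1"
    using p_left_iter[where n=K and x="[]"] p_nil by simp
  moreover have "(\<Sum>w\<in>{w::'a list. length w = K}. p w) = (\<Sum>w\<in>CKs p K. p w)"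
  proof (rule sum.mono_neutral_right[OF fS])
    show "CKs p K \<subseteq> {w. length w = K}" by (auto simp: CKs_def)
    show "\<forall>i\<in>{w. length w = K} - CKs p K. p i = 0"
      using p_nonneg by (auto simp: CKs_def less_le)
  qed
  ultimately show ?thesis by simp
qed

lemma CK_ne: "CKs p K \<noteq> {}"
proof
  assume "CKs p K = {}"
  then show False using CK_sum[of K] by simp
qed

lemma PK_nonneg: "PKs p a b \<ge> 0"
  by (simp add: PKs_def p_nonneg)

lemma row_sum:
  assumes K: "K \<ge> 1" and a: "a \<in> CKs p K"
  shows "(\<Sum>b\<in>CKs p K. PKs p a b) = 1"
proof -
  have la: "length a = K" and pa: "p a > 0" using a by (auto simp: CKs_def)
  have ane: "a \<noteq> []" using la K by auto
  have "(\<Sum>b\<in>CKs p K. PKs p a b) = (\<Sum>c\<in>UNIV. p (a @ [c]) / p a)"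
  proof (rule sum_reindex_helper[OF CK_fin, where f = "\<lambda>c. tl a @ [c]"])
    show "inj (\<lambda>c. tl a @ [c])" by (auto simp: inj_def)
  next
    fix b assume "b \<in> CKs p K" "PKs p a b \<noteq> 0"
    then have "b \<noteq> []" "butlast b = tl a" by (auto simp: PKs_def split: if_splits)
    then have "b = tl a @ [last b]" by (metis append_butlast_last_id)
    then show "b \<in> range (\<lambda>c. tl a @ [c])" by blast
  next
    fix c assume "tl a @ [c] \<notin> CKs p K"
    moreover have "length (tl a @ [c]) = K" using la K by simp
    ultimately have "p (tl a @ [c]) \<le> 0" by (auto simp: CKs_def)
    moreover have e: "[hd a] @ (tl a @ [c]) = a @ [c]" using ane by simp
    moreover have "p (a @ [c]) \<le> p (tl a @ [c])" using p_mono_left[of "[hd a]" "tl a @ [c]"] unfolding e .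
    ultimately have "p (a @ [c]) = 0" using p_nonneg[of "a @ [c]"] by linarith
    then show "p (a @ [c]) / p a = 0" by simp
  next
    fix c show "PKs p a (tl a @ [c]) = p (a @ [c]) / p a" by (simp add: PKs_def)
  qed
  also have "... = (\<Sum>c\<in>UNIV. p (a @ [c])) / p a" by (simp add: sum_divide_distrib)
  also have "... = 1" using p_right[of a] pa by simp
  finally show ?thesis .
qed

lemma stat_sum:
  assumes K: "K \<ge> 1" and b: "b \<in> CKs p K"
  shows "(\<Sum>a\<in>CKs p K. p a * PKs p a b) = p b"
proof -
  have lb: "length b = K" and pb: "p b > 0" using b by (auto simp: CKs_def)
  have bne: "b \<noteq> []" using lb K by auto
  have "(\<Sum>a\<in>CKs p K. p a * PKs p a b) = (\<Sum>c\<in>UNIV. p (c # b))"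
  proof (rule sum_reindex_helper[OF CK_fin, where f = "\<lambda>c. c # butlast b"])
    show "inj (\<lambda>c. c # butlast b)" by (auto simp: inj_def)
  next
    fix a assume a: "a \<in> CKs p K" "p a * PKs p a b \<noteq> 0"
    then have "butlast b = tl a" by (auto simp: PKs_def split: if_splits)
    moreover have "a \<noteq> []" using a K by (auto simp: CKs_def)
    ultimately have "a = hd a # butlast b" by simp
    then show "a \<in> range (\<lambda>c. c # butlast b)" by blast
  next
    fix c assume "c # butlast b \<notin> CKs p K"
    moreover have "length (c # butlast b) = K" using lb K by simp
    ultimately have "p (c # butlast b) \<le> 0" by (auto simp: CKs_def)
    moreover have "p ((c # butlast b) @ [last b]) \<le> p (c # butlast b)" by (rule p_mono_right)
    moreover have "(c # butlast b) @ [last b] = c # b" using bne by simp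
    ultimately show "p (c # b) = 0" using p_nonneg[of "c # b"] by simp
  next
    fix c assume "c # butlast b \<in> CKs p K"
    then have pc: "p (c # butlast b) > 0" by (simp add: CKs_def)
    have "(c # butlast b) @ [last b] = c # b" using bne by simp
    then show "p (c # butlast b) * PKs p (c # butlast b) b = p (c # b)"
      using pc bne by (simp add: PKs_def)
  qed
  also have "... = p b" using p_left[of b] by simp
  finally show ?thesis .
qed

lemma irr_K:
  assumes K: "K \<ge> 1"
    and IRRp: "\<And>x y. p x > 0 \<Longrightarrow> p y > 0 \<Longrightarrow> \<exists>z. p (x @ z @ y) > 0"
    and a: "a \<in> CKs p K" and b: "b \<in> CKs p K"
  shows "(a, b) \<in> {(a, b). a \<in> CKs p K \<and> b \<in> CKs p K \<and> PKs p a b > 0}\<^sup>+"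
proof -
  let ?R = "{(a, b). a \<in> CKs p K \<and> b \<in> CKs p K \<and> PKs p a b > 0}"
  have la: "length a = K" "p a > 0" and lb: "length b = K" "p b > 0" using a b by (auto simp: CKs_def)
  obtain z where pz: "p (a @ z @ b) > 0" using IRRp[OF la(2) lb(2)] by blast
  define Y where "Y = a @ z @ b"
  define Bs where "Bs = blocks K Y"
  have pY: "p Y > 0" using pz by (simp add: Y_def)
  have lY: "length Y \<ge> K + K" using la lb by (simp add: Y_def)
  have inC: "Bs ! i \<in> CKs p K" if "i < length Bs" for i
  proof -
    have sp: "length (Bs ! i) = K" "Y = take i Y @ Bs ! i @ drop (i + K) Y"
      using blocks_elem_split[of i K Y] that by (auto simp: Bs_def)
    have "p Y \<le> p (Bs ! i)" using p_mono_mid[of "take i Y" "Bs ! i" "drop (i + K) Y"] sp(2) by simp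
    then show ?thesis using sp(1) pY by (simp add: CKs_def)
  qed
  have edge: "(Bs ! i, Bs ! Suc i) \<in> ?R" if i: "Suc i < length Bs" for i
  proof -
    have st: "Bs ! Suc i \<noteq> []" "butlast (Bs ! Suc i) = tl (Bs ! i)"
        "Bs ! i @ [last (Bs ! Suc i)] = take (Suc K) (drop i Y)"
      using blocks_step[OF K, of i Y] i by (auto simp: Bs_def)
    have e: "take i Y @ take (Suc K) (drop i Y) @ drop (Suc K) (drop i Y) = Y"
      by (simp only: append_take_drop_id)
    have "p Y \<le> p (take (Suc K) (drop i Y))"
      using p_mono_mid[of "take i Y" "take (Suc K) (drop i Y)" "drop (Suc K) (drop i Y)"] unfolding e .
    then have num: "p (Bs ! i @ [last (Bs ! Suc i)]) > 0" using st(3) pY by simp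
    have den: "p (Bs ! i) > 0" using inC[of i] i by (simp add: CKs_def)
    have "PKs p (Bs ! i) (Bs ! Suc i) > 0" using st(1,2) num den by (simp add: PKs_def)
    then show ?thesis using inC[of i] inC[of "Suc i"] i by simp
  qed
  have ch: "(Bs ! 0, Bs ! j) \<in> ?R\<^sup>+" if "1 \<le> j" "j < length Bs" for j
    using that
  proof (induction j)
    case 0 then show ?case by simp
  next
    case (Suc j)
    show ?case
    proof (cases "j = 0")
      case True then show ?thesis using edge[of 0] Suc by auto
    next
      case False
      then have "(Bs ! 0, Bs ! j) \<in> ?R\<^sup>+" using Suc by simp
      moreover have "(Bs ! j, Bs ! Suc j) \<in> ?R" using edge[of j] Suc by simp
      ultimately show ?thesis by (rule trancl_into_trancl)
    qed
  qed
  have b0: "Bs ! 0 = a"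
  proof -
    have "Bs ! 0 = take K Y" using lY by (simp add: Bs_def nth_blocks)
    then show ?thesis using la by (simp add: Y_def)
  qed
  have lBs: "length Bs = Suc (length Y) - K" by (simp add: Bs_def)
  have bl: "Bs ! (length Bs - 1) = b"
  proof -
    have ne: "Bs \<noteq> []" using lBs lY by auto
    have "Bs ! (length Bs - 1) = last Bs" using ne by (simp add: last_conv_nth)
    also have "... = drop (length Y - K) Y" using lY by (simp add: Bs_def last_blocks)
    finally show ?thesis using lb by (simp add: Y_def)
  qed
  have "(Bs ! 0, Bs ! (length Bs - 1)) \<in> ?R\<^sup>+" using ch[of "length Bs - 1"] lBs lY K by simp
  then show ?thesis using b0 bl by simp
qed

end

context sm
begin

lemma hatK_out:
  assumes K: "K \<ge> 1" and W: "W \<noteq> []" and nW: "\<not> set W \<subseteq> CKs p K"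
  shows "hat (distr \<nu> seqM (higher_block K)) W = 0"
proof (cases "\<exists>z. length z \<ge> K \<and> W = blocks K z")
  case True
  then obtain z where z: "length z \<ge> K" "W = blocks K z" by blast
  obtain w where w: "w \<in> set W" "w \<notin> CKs p K" using nW by blast
  then obtain i where i: "i < length W" "W ! i = w" by (auto simp: in_set_conv_nth)
  have sp: "length w = K" "z = take i z @ w @ drop (i + K) z"
    using blocks_elem_split[of i K z] i z by auto
  have "p z \<le> p w" using p_mono_mid[of "take i z" w "drop (i + K) z"] sp(2) by simp
  moreover have "p w \<le> 0" using w(2) sp(1) by (auto simp: CKs_def)
  ultimately have "p z = 0" using p_nonneg[of z] by simp
  then show ?thesis using hat_rho_blocks[OF K z(1)] z(2) by simp
next
  case False
  then show ?thesis using hat_rho_zero[OF W] by blast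
qed

lemma hatK_in:
  assumes K: "K \<ge> 1" and MK: "MI p K"
  shows "W \<noteq> [] \<longrightarrow> set W \<subseteq> CKs p K \<longrightarrow> hat (distr \<nu> seqM (higher_block K)) W
           = p (hd W) * (\<Prod>i<length W - 1. PKs p (W ! i) (W ! Suc i))"
proof (induction W rule: rev_induct)
  case Nil then show ?case by simp
next
  case (snoc b W)
  let ?H = "hat (distr \<nu> seqM (higher_block K))"
  show ?case
  proof (intro impI)
    assume sub: "set (W @ [b]) \<subseteq> CKs p K"
    show "?H (W @ [b]) = p (hd (W @ [b])) * (\<Prod>i<length (W @ [b]) - 1. PKs p ((W @ [b]) ! i) ((W @ [b]) ! Suc i))"
    proof (cases "W = []")
      case True
      have b: "length b = K" using sub by (auto simp: CKs_def True)
      have "?H [b] = p b" using hat_rho_blocks[OF K, of b] b blocks_single[OF b K] by simp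
      then show ?thesis using True by simp
    next
      case Wne: False
      have IH: "?H W = p (hd W) * (\<Prod>i<length W - 1. PKs p (W ! i) (W ! Suc i))"
        using snoc Wne sub by simp
      have RHS: "p (hd (W @ [b])) * (\<Prod>i<length (W @ [b]) - 1. PKs p ((W @ [b]) ! i) ((W @ [b]) ! Suc i))
          = ?H W * PKs p (last W) b"
        using prod_snoc[OF Wne, of "PKs p" b] Wne IH by simp
      have lWC: "last W \<in> CKs p K" using sub Wne by auto
      then have plW: "p (last W) > 0" and llW: "length (last W) = K" by (auto simp: CKs_def)
      have "?H (W @ [b]) = ?H W * PKs p (last W) b"
      proof (cases "b \<noteq> [] \<and> butlast b = tl (last W)")
        case cons: True
        show ?thesis
        proof (cases "\<exists>z. length z \<ge> K \<and> W = blocks K z")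
          case True
          then obtain z where z: "length z \<ge> K" "W = blocks K z" by blast
          define c where "c = last b"
          have lastW: "last W = drop (length z - K) z" using z last_blocks by simp
          have e1: "Suc (length z) - K = Suc (length z - K)" using z(1) by simp
          have "drop (Suc (length z) - K) (z @ [c]) = drop (Suc (length z) - K) z @ [c]"
            using z(1) K by simp
          also have "drop (Suc (length z) - K) z = tl (last W)"
            unfolding e1 lastW by (simp add: drop_Suc tl_drop)
          also have "tl (last W) @ [c] = b"
          proof -
            have bl: "butlast b = tl (last W)" and bne: "b \<noteq> []" using cons by auto
            have "tl (last W) @ [c] = butlast b @ [last b]" by (simp only: bl c_def)
            also have "... = b" using bne by simp
            finally show ?thesis .
          qed
          finally have db: "drop (Suc (length z) - K) (z @ [c]) = b" .
          have bz: "blocks K (z @ [c]) = W @ [b]" using blocks_snoc[OF K z(1), of c] db z(2) by simp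
          have h1: "?H (W @ [b]) = p (z @ [c])"
            using hat_rho_blocks[OF K, of "z @ [c]"] z(1) bz by simp
          have h2: "?H W = p z" using hat_rho_blocks[OF K z(1)] z(2) by simp
          have h3: "PKs p (last W) b = p (last W @ [c]) / p (last W)"
            using cons by (simp add: PKs_def c_def)
          have zs: "z = take (length z - K) z @ last W" using lastW by simp
          have "p (take (length z - K) z @ last W @ [c]) * p (last W) = p (take (length z - K) z @ last W) * p (last W @ [c])"
            using MK llW unfolding MI_def by blast
          then have "p (z @ [c]) * p (last W) = p z * p (last W @ [c])"
            using zs by (metis append.assoc)
          then show ?thesis unfolding h1 h2 h3 using plW by (simp add: field_simps)
        next
          case False
          have h2: "?H W = 0" using hat_rho_zero[OF Wne] False by blast
          have "\<not> (\<exists>z'. length z' \<ge> K \<and> W @ [b] = blocks K z')"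
          proof
            assume "\<exists>z'. length z' \<ge> K \<and> W @ [b] = blocks K z'"
            then obtain z' where "W @ [b] = blocks K z'" by blast
            from blocks_prefix[OF K Wne this] False show False by blast
          qed
          then have "?H (W @ [b]) = 0" using hat_rho_zero[of "W @ [b]"] by simp
          then show ?thesis using h2 by simp
        qed
      next
        case ncons: False
        have h3: "PKs p (last W) b = 0" using ncons by (auto simp: PKs_def)
        have "\<not> (\<exists>z'. length z' \<ge> K \<and> W @ [b] = blocks K z')"
        proof
          assume "\<exists>z'. length z' \<ge> K \<and> W @ [b] = blocks K z'"
          then obtain z' where e: "W @ [b] = blocks K z'" by blast
          define i where "i = length W - 1"
          have si: "Suc i = length W" using Wne by (simp add: i_def)
          have "Suc i < length (blocks K z')" using e[symmetric] si by (metis length_append_singleton lessI)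
          from blocks_step[OF K this] have st: "blocks K z' ! Suc i \<noteq> []" "butlast (blocks K z' ! Suc i) = tl (blocks K z' ! i)"
            by auto
          have bb: "blocks K z' ! Suc i = b" using e[symmetric] si by (simp add: nth_append)
          have bw: "blocks K z' ! i = last W" using e[symmetric] si Wne
            by (simp add: nth_append last_conv_nth i_def)
          show False using st bb bw ncons by simp
        qed
        then have "?H (W @ [b]) = 0" using hat_rho_zero[of "W @ [b]"] by simp
        then show ?thesis using h3 by simp
      qed
      then show ?thesis using RHS by simp
    qed
  qed
qed

lemma markovK:
  assumes K: "K \<ge> 1" and MK: "MI p K"
    and IRRp: "\<And>x y. p x > 0 \<Longrightarrow> p y > 0 \<Longrightarrow> \<exists>z. p (x @ z @ y) > 0"
  shows "is_markov_measure (CKs p K) (PKs p) p (distr \<nu> seqM (higher_block K))"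
  unfolding is_markov_measure_def
proof (intro conjI allI impI)
  show "markov_data (CKs p K) (PKs p) p"
    unfolding markov_data_def
    using CK_fin CK_ne PK_nonneg row_sum[OF K] irr_K[OF K IRRp] p_nonneg CK_sum stat_sum[OF K]
    by auto
  show "prob_space (distr \<nu> seqM (higher_block K))"
    by (rule prob_space.prob_space_distr[OF prob nu_meas])
  show "sets (distr \<nu> seqM (higher_block K)) = sets seqM" by simp
  fix W :: "'a list list" assume W: "W \<noteq> []"
  show "hat (distr \<nu> seqM (higher_block K)) W =
     (if set W \<subseteq> CKs p K then p (hd W) * (\<Prod>i<length W - 1. PKs p (W ! i) (W ! Suc i)) else 0)"
    using hatK_in[OF K MK] hatK_out[OF K W] W by auto
qed

end

lemma pow_bound_Suc: "Suc m \<le> 2 ^ m"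
  by (induction m) auto

lemma pow_bound: "m \<le> 2 ^ (m - 1)"
  using pow_bound_Suc[of "m - 1"] by (cases m) auto

theorem mainTheorem1:
  fixes \<nu> :: "(int \<Rightarrow> 'a::finite) measure"
  assumes "prob_space \<nu>"
    and "shift_invariant \<nu>"
    and "sofic_measure \<nu>"
    and "\<not> k_step_markov (2 ^ (min_rep_dim (hat \<nu>) ^ 2 - 1)) \<nu>"
  shows "\<forall>k::nat. k \<ge> 1 \<longrightarrow> \<not> k_step_markov k \<nu>"
proof (intro allI impI notI)
  fix k :: nat assume k: "k \<ge> 1" and kM: "k_step_markov k \<nu>"
  from assms(3) obtain Y where "sofic_on \<nu> Y" by (auto simp: sofic_measure_def)
  then have sets_nu: "sets \<nu> = sets seqM" by (auto simp: sofic_on_def)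
  interpret sm \<nu> by (rule sm.intro[OF assms(1) sets_nu assms(2)])
  from kM obtain Ck Pk vk where M: "is_markov_measure Ck Pk vk (distr \<nu> seqM (higher_block k))"
    by (auto simp: k_step_markov_def markov1_def)
  have MIk: "MI (hat \<nu>) k" by (rule MI_markov[OF M k])
  have ex: "\<exists>n lam Phi gam. lin_rep (hat \<nu>) n lam Phi gam" using rep_exists[OF MIk k] by blast
  define n where "n = min_rep_dim (hat \<nu>)"
  have "\<exists>lam Phi gam. lin_rep (hat \<nu>) n lam Phi gam"
    unfolding n_def min_rep_dim_def using ex by (rule LeastI_ex)
  then obtain lam Phi gam where R: "lin_rep (hat \<nu>) n lam Phi gam" by blast
  obtain E where E: "Gen (hat \<nu>) 0 \<subseteq> fs.span E" "finite E" "card E \<le> n * n"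
    using gen0_span[OF R] by blast
  have Zk0: "Gen (hat \<nu>) k \<subseteq> {0}"
  proof
    fix f assume "f \<in> Gen (hat \<nu>) k"
    then obtain w u1 u2 where f: "f = Gfun (hat \<nu>) w u1 u2" "length w = k" by (auto simp: Gen_def)
    have "f = 0"
    proof (rule ext, clarify)
      fix s1 s2
      show "f (s1, s2) = 0 (s1, s2)"
        using Zk[OF MIk k f(2), of u1 s1 u2 s2] by (simp add: f(1) Gfun_def)
    qed
    then show "f \<in> {0}" by simp
  qed
  have ZN: "Gen (hat \<nu>) (n * n) \<subseteq> {0}" by (rule chain[OF E Zk0])
  define K :: nat where "K = 2 ^ (n ^ 2 - 1)"
  have NK: "n * n \<le> K" using pow_bound[of "n * n"] by (simp add: K_def power2_eq_square)
  have ZK: "Gen (hat \<nu>) K \<subseteq> {0}" using Gen_mono[OF NK] ZN by blast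
  have K1: "K \<ge> 1" by (simp add: K_def)
  have MIK: "MI (hat \<nu>) K"
    unfolding MI_def
  proof (intro allI impI)
    fix u w :: "'a list" and a :: 'a assume w: "length w = K"
    have "Gfun (hat \<nu>) w u [] \<in> Gen (hat \<nu>) K" using w by (auto simp: Gen_def)
    then have "Gfun (hat \<nu>) w u [] = 0" using ZK by blast
    then have "Gfun (hat \<nu>) w u [] ([a], []) = 0" by simp
    then show "hat \<nu> (u @ w @ [a]) * hat \<nu> w = hat \<nu> (u @ w) * hat \<nu> (w @ [a])"
      by (simp add: Gfun_def)
  qed
  have IRRp: "\<And>x y. hat \<nu> x > 0 \<Longrightarrow> hat \<nu> y > 0 \<Longrightarrow> \<exists>z. hat \<nu> (x @ z @ y) > 0"
    using IRR[OF M k] by blast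
  have "is_markov_measure (CKs (hat \<nu>) K) (PKs (hat \<nu>)) (hat \<nu>) (distr \<nu> seqM (higher_block K))"
    by (rule markovK[OF K1 MIK IRRp])
  then have "k_step_markov K \<nu>" by (auto simp: k_step_markov_def markov1_def)
  then show False using assms(4) by (simp add: K_def n_def)
qed

end
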